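(* Let $V=\mathbb{C}^{2n}$ with basis $v_1,\dots,v_{2n}$ and symplectic form with Gram matrix $J'=\begin{pmatrix}0&J\\-J&0\end{pmatrix}$, $J$ the $n\times n$ anti-diagonal matrix of ones, and let $\mathrm{Sp}_{2n}\times\mathbb{G}_m$ act on $\mathfrak{sp}_{2n}\oplus S^3V$, with $\mathrm{Sp}_{2n}$ acting naturally and $\mathbb{G}_m$ acting by scalar weight $2$ on $\mathfrak{sp}_{2n}$ and weight $3$ on $S^3V$. Let $\mathfrak{h}_2$ be the $2$-dimensional reflection representation of $\mathfrak{S}_3$. Then the quotient $(\mathfrak{h}_2\oplus\mathfrak{h}_2^* )^{\oplus n}/\mathfrak{S}_3$ is isomorphic to: (i) the closure of the $\mathrm{Sp}_{2n}\times\mathbb{G}_m$-orbit of $(e_{11}-e_{2n,2n},\ v_1\otimes v_1\otimes v_1+v_{2n}\otimes v_{2n}\otimes v_{2n})\in\mathfrak{sp}_{2n}\oplus S^3V$; (ii) the closure of the $\mathrm{Sp}_{2n}\times\mathbb{G}_m$-orbit of $(e_{11}-e_{2n,2n},\ a\,v_1\otimes v_1\otimes v_1+b\,v_{2n}\otimes v_{2n}\otimes v_{2n})$, for any $a,b\in\mathbb{C}^\times$.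
   Context: $e_{ij}$ denotes the matrix unit; $S^3V$ is the symmetric cube. $\mathfrak{S}_3$ acts diagonally on $(\mathfrak{h}_2\oplus\mathfrak{h}_2^* )^{\oplus n}$. *)

theory Defs
  imports Complex_Main "HOL-Combinatorics.Permutations"
begin

text \<open>Points of an affine space are functions from an index type to the complex
numbers; a polynomial function is built from constants and coordinate
projections by sums and products (so it involves finitely many coordinates).\<close>

inductive poly_fun :: "(('i \<Rightarrow> complex) \<Rightarrow> complex) \<Rightarrow> bool" where
  pf_const: "poly_fun (\<lambda>x. c)"
| pf_var: "poly_fun (\<lambda>x. x i)"
| pf_add: "poly_fun p \<Longrightarrow> poly_fun q \<Longrightarrow> poly_fun (\<lambda>x. p x + q x)"
| pf_mult: "poly_fun p \<Longrightarrow> poly_fun q \<Longrightarrow> poly_fun (\<lambda>x. p x * q x)"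

definition zariski_closure :: "('i \<Rightarrow> complex) set \<Rightarrow> ('i \<Rightarrow> complex) set" where
  "zariski_closure S =
     {x. \<forall>p. poly_fun p \<and> (\<forall>y\<in>S. p y = 0) \<longrightarrow> p x = 0}"

text \<open>@quotient_iso X act G Y@: the categorical quotient X/G (X a closed
subvariety with a G-action) is isomorphic to the closed subvariety Y, i.e.
there is a G-invariant morphism \<pi> : X \<rightarrow> Y whose pullback
\<pi>^* : C[Y] \<rightarrow> C[X]^G is an isomorphism (injective and surjective).\<close>

definition quotient_iso ::
  "('i \<Rightarrow> complex) set \<Rightarrow> ('g \<Rightarrow> ('i \<Rightarrow> complex) \<Rightarrow> ('i \<Rightarrow> complex)) \<Rightarrow> 'g set
     \<Rightarrow> ('j \<Rightarrow> complex) set \<Rightarrow> bool" where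
  "quotient_iso X act G Y \<longleftrightarrow>
     (\<exists>\<pi>. (\<forall>j. poly_fun (\<lambda>x. \<pi> x j)) \<and> \<pi> ` X \<subseteq> Y
        \<and> (\<forall>g\<in>G. \<forall>x\<in>X. \<pi> (act g x) = \<pi> x)
        \<and> (\<forall>p. poly_fun p \<and> (\<forall>x\<in>X. p (\<pi> x) = 0) \<longrightarrow> (\<forall>y\<in>Y. p y = 0))
        \<and> (\<forall>q. poly_fun q \<and> (\<forall>g\<in>G. \<forall>x\<in>X. q (act g x) = q x)
               \<longrightarrow> (\<exists>p. poly_fun p \<and> (\<forall>x\<in>X. q x = p (\<pi> x)))))"

text \<open>Coordinates (k, b, c): copy k < n, b = False for h_2 and b = True for
h_2^*, c < 3.  h_2 = {sum-zero vectors in C^3} with S_3 permuting coordinates;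
h_2^* is realised as the sum-zero vectors of the dual (C^3)^*, on which a
permutation matrix P acts by (P^{-1})^T = P.\<close>

definition refl_space :: "nat \<Rightarrow> (nat \<times> bool \<times> nat \<Rightarrow> complex) set" where
  "refl_space n =
     {x. (\<forall>k b c. (n \<le> k \<or> 3 \<le> c) \<longrightarrow> x (k, b, c) = 0)
       \<and> (\<forall>k<n. \<forall>b. x (k, b, 0) + x (k, b, 1) + x (k, b, 2) = 0)}"

definition S3 :: "(nat \<Rightarrow> nat) set" where
  "S3 = {\<sigma>. \<sigma> permutes {0, 1, 2}}"

definition S3_act :: "(nat \<Rightarrow> nat) \<Rightarrow> (nat \<times> bool \<times> nat \<Rightarrow> complex) \<Rightarrow> (nat \<times> bool \<times> nat \<Rightarrow> complex)" where
  "S3_act \<sigma> x = (\<lambda>(k, b, c). x (k, b, inv \<sigma> c))"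

text \<open>Basis v_1..v_{2n} is indexed 0..2n-1.  Points of gl_{2n} \<oplus> V^{\<otimes>3}
are functions on (nat \<times> nat) + (nat \<times> nat \<times> nat), zero outside range;
sp_{2n} and S^3 V are closed linear subspaces containing the orbits.\<close>

definition Jp :: "nat \<Rightarrow> nat \<Rightarrow> nat \<Rightarrow> complex" where
  "Jp n i j = (if i < 2*n \<and> j < 2*n \<and> i + j = 2*n - 1 then (if i < n then 1 else -1) else 0)"

definition sp_group :: "nat \<Rightarrow> (nat \<Rightarrow> nat \<Rightarrow> complex) set" where
  "sp_group n = {g. \<forall>i<2*n. \<forall>j<2*n.
      (\<Sum>a<2*n. \<Sum>b<2*n. g a i * Jp n a b * g b j) = Jp n i j}"

definition pt :: "(nat \<times> nat \<Rightarrow> complex) \<Rightarrow> (nat \<times> nat \<times> nat \<Rightarrow> complex)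
                    \<Rightarrow> ((nat \<times> nat) + (nat \<times> nat \<times> nat) \<Rightarrow> complex)" where
  "pt M T = case_sum M T"

text \<open>Orbit of (M, T) under Sp_{2n} \<times> G_m: g acts by conjugation on the first
summand and by g \<otimes> g \<otimes> g on the second; t acts by t^2 and t^3.\<close>

definition sp_orbit :: "nat \<Rightarrow> (nat \<times> nat \<Rightarrow> complex) \<Rightarrow> (nat \<times> nat \<times> nat \<Rightarrow> complex)
     \<Rightarrow> ((nat \<times> nat) + (nat \<times> nat \<times> nat) \<Rightarrow> complex) set" where
  "sp_orbit n M T =
     {pt (\<lambda>(i, j). if i < 2*n \<and> j < 2*n then
                     t^2 * (\<Sum>a<2*n. \<Sum>b<2*n. g i a * M (a, b) * h b j) else 0)
         (\<lambda>(i, j, k). if i < 2*n \<and> j < 2*n \<and> k < 2*n then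
                     t^3 * (\<Sum>a<2*n. \<Sum>b<2*n. \<Sum>c<2*n. g i a * g j b * g k c * T (a, b, c))
                   else 0)
      | g h t. g \<in> sp_group n
          \<and> (\<forall>i<2*n. \<forall>j<2*n. (\<Sum>a<2*n. g i a * h a j) = (if i = j then 1 else 0))
          \<and> t \<noteq> 0}"

definition M0 :: "nat \<Rightarrow> nat \<times> nat \<Rightarrow> complex" where
  "M0 n = (\<lambda>(i, j). if i = 0 \<and> j = 0 then 1
                     else if i = 2*n - 1 \<and> j = 2*n - 1 then -1 else 0)"

definition T0 :: "nat \<Rightarrow> complex \<Rightarrow> complex \<Rightarrow> nat \<times> nat \<times> nat \<Rightarrow> complex" where
  "T0 n a b = (\<lambda>(i, j, k). if i = 0 \<and> j = 0 \<and> k = 0 then a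
                     else if i = 2*n - 1 \<and> j = 2*n - 1 \<and> k = 2*n - 1 then b else 0)"

end

theory Submission
  imports Defs
begin


lemma pf_cmul: "poly_fun p \<Longrightarrow> poly_fun (\<lambda>x. c * p x)"
  by (intro pf_mult pf_const)

lemma pf_neg: "poly_fun p \<Longrightarrow> poly_fun (\<lambda>x. - p x)"
  using pf_cmul[of p "-1"] by simp

lemma pf_sub: "poly_fun p \<Longrightarrow> poly_fun q \<Longrightarrow> poly_fun (\<lambda>x. p x - q x)"
  using pf_add[OF _ pf_neg[of q]] by simp

lemma pf_sum: "finite A \<Longrightarrow> (\<And>a. a \<in> A \<Longrightarrow> poly_fun (p a)) \<Longrightarrow> poly_fun (\<lambda>x. \<Sum>a\<in>A. p a x)"
proof (induction A rule: finite_induct)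
  case empty
  then show ?case using pf_const[of 0] by simp
next
  case (insert a A)
  then show ?case by (simp add: pf_add)
qed

lemma pf_if: "poly_fun p \<Longrightarrow> poly_fun q \<Longrightarrow> poly_fun (\<lambda>x. if P then p x else q x)"
  by (cases P) auto

lemma pf_compose_lin:
  assumes "poly_fun p" and "\<And>i. poly_fun (\<lambda>x. f x i)"
  shows "poly_fun (\<lambda>x. p (f x))"
  using assms(1) by induction (auto intro: pf_const assms(2) pf_add pf_mult)

lemma pf_isCont:
  assumes "poly_fun p" and "\<And>i. isCont (\<lambda>e. Y e i) e0"
  shows "isCont (\<lambda>e. p (Y e)) e0"
  using assms(1) by induction (auto intro: assms(2) continuous_intros)

definition om :: complex where "om = Complex (-1/2) (sqrt 3 / 2)"

lemma om_sum: "1 + om + om^2 = 0"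
  by (simp add: om_def complex_eq_iff power2_eq_square)

lemma om3: "om^3 = 1"
proof -
  have "om^3 - 1 = (om - 1) * (1 + om + om^2)" by (simp add: algebra_simps power3_eq_cube power2_eq_square)
  then show ?thesis using om_sum by simp
qed

lemma om_ne0: "om \<noteq> 0" using om3 by auto


definition omg :: "nat \<Rightarrow> (nat \<Rightarrow> complex) \<Rightarrow> (nat \<Rightarrow> complex) \<Rightarrow> complex" where
  "omg n x y = (\<Sum>i<2*n. \<Sum>j<2*n. x i * Jp n i j * y j)"

definition Vs :: "nat \<Rightarrow> (nat \<Rightarrow> complex) set" where
  "Vs n = {v. \<forall>i. 2*n \<le> i \<longrightarrow> v i = 0}"

definition uvec :: "nat \<Rightarrow> nat \<Rightarrow> complex" where
  "uvec k = (\<lambda>i. if i = k then 1 else 0)"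

lemma uvec_Vs: "k < 2*n \<Longrightarrow> uvec k \<in> Vs n"
  by (auto simp: uvec_def Vs_def)

lemma Jp_antisym: "Jp n j i = - Jp n i j"
  by (auto simp: Jp_def)

lemma Jp_nz: "i < 2*n \<Longrightarrow> Jp n i j = (if j = 2*n-1-i then Jp n i j else 0)"
  by (auto simp: Jp_def)

lemma Jp_nz': "j < 2*n \<Longrightarrow> Jp n i j = (if i = 2*n-1-j then Jp n i j else 0)"
  by (auto simp: Jp_def)

lemma sum_Jp_right: "i < 2*n \<Longrightarrow> (\<Sum>j<2*n. Jp n i j * y j) = Jp n i (2*n-1-i) * y (2*n-1-i)"
proof -
  assume i: "i < 2*n"
  have "(\<Sum>j<2*n. Jp n i j * y j) = (\<Sum>j<2*n. if j = 2*n-1-i then Jp n i j * y j else 0)"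
    by (rule sum.cong[OF refl]) (subst Jp_nz[OF i], auto)
  also have "\<dots> = Jp n i (2*n-1-i) * y (2*n-1-i)" using i by (simp add: sum.delta')
  finally show ?thesis .
qed

lemma sum_Jp_left: "j < 2*n \<Longrightarrow> (\<Sum>i<2*n. x i * Jp n i j) = x (2*n-1-j) * Jp n (2*n-1-j) j"
proof -
  assume j: "j < 2*n"
  have "(\<Sum>i<2*n. x i * Jp n i j) = (\<Sum>i<2*n. if i = 2*n-1-j then x i * Jp n i j else 0)"
    by (rule sum.cong[OF refl]) (subst Jp_nz'[OF j], auto)
  also have "\<dots> = x (2*n-1-j) * Jp n (2*n-1-j) j" using j by (simp add: sum.delta')
  finally show ?thesis .
qed

lemma omg_alt: "omg n x y = (\<Sum>i<2*n. x i * (\<Sum>j<2*n. Jp n i j * y j))"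
  by (simp add: omg_def sum_distrib_left mult.assoc)

lemma omg_alt2: "omg n x y = (\<Sum>j<2*n. (\<Sum>i<2*n. x i * Jp n i j) * y j)"
  unfolding omg_def by (subst sum.swap) (simp add: sum_distrib_right)

lemma sum_uvec_l: "k < 2*n \<Longrightarrow> (\<Sum>i<2*n. uvec k i * f i) = f k"
proof -
  assume "k < 2*n"
  have "(\<Sum>i<2*n. uvec k i * f i) = (\<Sum>i<2*n. if i = k then f i else 0)"
    by (rule sum.cong) (auto simp: uvec_def)
  then show ?thesis using \<open>k < 2*n\<close> by (simp add: sum.delta')
qed

lemma sum_uvec_r: "k < 2*n \<Longrightarrow> (\<Sum>i<2*n. f i * uvec k i) = f k"
  using sum_uvec_l[of k n f] by (simp add: mult.commute)

lemma omg_e_left: "i < 2*n \<Longrightarrow> omg n (uvec i) y = Jp n i (2*n-1-i) * y (2*n-1-i)"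
  unfolding omg_alt by (simp add: sum_Jp_right sum_uvec_l)

lemma omg_e_right: "j < 2*n \<Longrightarrow> omg n x (uvec j) = x (2*n-1-j) * Jp n (2*n-1-j) j"
  unfolding omg_alt2 by (simp add: sum_Jp_left sum_uvec_r)

lemma omg_antisym: "omg n x y = - omg n y x"
  unfolding omg_def
  apply (subst sum.swap)
  apply (simp add: sum_negf[symmetric])
  apply (intro sum.cong refl)
  apply (subst Jp_antisym) apply simp
  done

lemma omg_self: "omg n x x = 0"
  using omg_antisym[of n x x] by simp

lemma omg_right_lin: "omg n x (\<lambda>i. y i + c * z i) = omg n x y + c * omg n x z"
  unfolding omg_def by (simp add: algebra_simps sum.distrib sum_distrib_left)

lemma omg_left_lin: "omg n (\<lambda>i. y i + c * z i) x = omg n y x + c * omg n z x"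
  unfolding omg_def by (simp add: algebra_simps sum.distrib sum_distrib_left)

lemma omg_right_scale: "omg n x (\<lambda>i. c * z i) = c * omg n x z"
  using omg_right_lin[of n x "\<lambda>_. 0" c z] by (simp add: omg_def)

lemma omg_left_scale: "omg n (\<lambda>i. c * z i) x = c * omg n z x"
  using omg_left_lin[of n "\<lambda>_. 0" c z x] by (simp add: omg_def)

lemma omg_right_diff: "omg n x (\<lambda>i. y i - z i) = omg n x y - omg n x z"
  using omg_right_lin[of n x y "-1" z] by simp

lemma omg_left_diff: "omg n (\<lambda>i. y i - z i) x = omg n y x - omg n z x"
  using omg_left_lin[of n y "-1" z x] by simp

lemma Vs_sum_uvec: "v \<in> Vs n \<Longrightarrow> (\<Sum>b<2*n. v b * uvec b i) = v i"
  by (cases "i < 2*n") (auto simp: uvec_def Vs_def if_distrib cong: if_cong)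

lemma omg_rep: "v \<in> Vs n \<Longrightarrow> omg n x v = (\<Sum>b<2*n. v b * omg n x (uvec b))"
proof -
  assume v: "v \<in> Vs n"
  have "(\<Sum>b<2*n. v b * omg n x (uvec b)) = (\<Sum>b<2*n. v b * (x (2*n-1-b) * Jp n (2*n-1-b) b))"
    by (intro sum.cong refl) (simp add: omg_e_right)
  also have "\<dots> = omg n x v"
    unfolding omg_alt2 apply (intro sum.cong refl) apply (subst sum_Jp_left) by (auto simp: mult.commute)
  finally show ?thesis by simp
qed


definition sympm :: "nat \<Rightarrow> ((nat \<Rightarrow> complex) \<Rightarrow> (nat \<Rightarrow> complex)) \<Rightarrow> bool" where
  "sympm n f \<longleftrightarrow> (\<forall>v\<in>Vs n. f v \<in> Vs n)
     \<and> (\<forall>v\<in>Vs n. \<forall>i. f v i = (\<Sum>b<2*n. v b * f (uvec b) i))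
     \<and> (\<forall>x\<in>Vs n. \<forall>y\<in>Vs n. omg n (f x) (f y) = omg n x y)
     \<and> (\<exists>f'. (\<forall>v\<in>Vs n. f' v \<in> Vs n) \<and> (\<forall>v\<in>Vs n. f (f' v) = v))"

lemma sympm_comp:
  assumes f: "sympm n f" and g: "sympm n g"
  shows "sympm n (\<lambda>v. f (g v))"
proof -
  have fV: "\<And>v. v \<in> Vs n \<Longrightarrow> f v \<in> Vs n" and gV: "\<And>v. v \<in> Vs n \<Longrightarrow> g v \<in> Vs n"
    using f g by (auto simp: sympm_def)
  have fr: "\<And>v i. v \<in> Vs n \<Longrightarrow> f v i = (\<Sum>b<2*n. v b * f (uvec b) i)"
    using f by (auto simp: sympm_def)
  have gr: "\<And>v i. v \<in> Vs n \<Longrightarrow> g v i = (\<Sum>b<2*n. v b * g (uvec b) i)"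
    using g by (auto simp: sympm_def)
  have rep: "f (g v) i = (\<Sum>b<2*n. v b * f (g (uvec b)) i)" if v: "v \<in> Vs n" for v i
  proof -
    have "f (g v) i = (\<Sum>a<2*n. g v a * f (uvec a) i)" using fr gV v by blast
    also have "\<dots> = (\<Sum>a<2*n. (\<Sum>b<2*n. v b * g (uvec b) a) * f (uvec a) i)"
      using gr[OF v] by simp
    also have "\<dots> = (\<Sum>b<2*n. v b * (\<Sum>a<2*n. g (uvec b) a * f (uvec a) i))"
      by (simp add: sum_distrib_left sum_distrib_right mult.assoc) (rule sum.swap)
    also have "\<dots> = (\<Sum>b<2*n. v b * f (g (uvec b)) i)"
      apply (intro sum.cong refl)
      using fr gV uvec_Vs by (metis lessThan_iff)
    finally show ?thesis .
  qed
  obtain f' where f': "\<forall>v\<in>Vs n. f' v \<in> Vs n" "\<forall>v\<in>Vs n. f (f' v) = v" using f by (auto simp: sympm_def)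
  obtain g' where g': "\<forall>v\<in>Vs n. g' v \<in> Vs n" "\<forall>v\<in>Vs n. g (g' v) = v" using g by (auto simp: sympm_def)
  have "\<forall>v\<in>Vs n. g' (f' v) \<in> Vs n" "\<forall>v\<in>Vs n. f (g (g' (f' v))) = v" using f' g' by auto
  note inv = this
  have om: "\<forall>x\<in>Vs n. \<forall>y\<in>Vs n. omg n (f (g x)) (f (g y)) = omg n x y"
    using f g gV unfolding sympm_def by simp
  show ?thesis unfolding sympm_def
    apply (intro conjI)
    subgoal using fV gV by blast
    subgoal using rep by blast
    subgoal using om by blast
    subgoal using inv by (intro exI[of _ "\<lambda>v. g' (f' v)"]) blast
    done
qed

definition tv :: "nat \<Rightarrow> (nat \<Rightarrow> complex) \<Rightarrow> complex \<Rightarrow> (nat \<Rightarrow> complex) \<Rightarrow> (nat \<Rightarrow> complex)" where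
  "tv n a c v = (\<lambda>i. v i + c * omg n a v * a i)"

lemma tv_Vs: "a \<in> Vs n \<Longrightarrow> v \<in> Vs n \<Longrightarrow> tv n a c v \<in> Vs n"
  by (auto simp: Vs_def tv_def)

lemma tv_inv: "tv n a c (tv n a (-c) v) = v"
proof -
  have "omg n a (tv n a (-c) v) = omg n a v"
    unfolding tv_def using omg_right_lin[of n a v "-c * omg n a v" a]
    by (simp add: omg_self mult.assoc)
  then show ?thesis by (simp add: tv_def algebra_simps)
qed

lemma tv_omg: "omg n (tv n a c x) (tv n a c y) = omg n x y"
proof -
  have e: "tv n a c v = (\<lambda>i. v i + (c * omg n a v) * a i)" for v by (simp add: tv_def mult.assoc)
  show ?thesis
    unfolding e omg_left_lin omg_right_lin omg_self
    using omg_antisym[of n x a] omg_antisym[of n y a] by (simp add: algebra_simps)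
qed

lemma tv_symp:
  assumes a: "a \<in> Vs n"
  shows "sympm n (tv n a c)"
proof -
  have rep: "tv n a c v i = (\<Sum>b<2*n. v b * tv n a c (uvec b) i)" if v: "v \<in> Vs n" for v i
  proof -
    have "(\<Sum>b<2*n. v b * tv n a c (uvec b) i) = (\<Sum>b<2*n. v b * uvec b i) + c * a i * (\<Sum>b<2*n. v b * omg n a (uvec b))"
      by (simp add: tv_def algebra_simps sum.distrib sum_distrib_left)
    also have "\<dots> = v i + c * a i * omg n a v" using v by (simp add: Vs_sum_uvec omg_rep[symmetric])
    finally show ?thesis by (simp add: tv_def algebra_simps)
  qed
  have "\<forall>v\<in>Vs n. tv n a (-c) v \<in> Vs n" "\<forall>v\<in>Vs n. tv n a c (tv n a (-c) v) = v"
    using tv_Vs[OF a] tv_inv by auto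
  then show ?thesis unfolding sympm_def using tv_Vs[OF a] rep tv_omg by blast
qed

lemma sympm_id: "sympm n (\<lambda>v. v)"
  unfolding sympm_def using Vs_sum_uvec by auto

lemma Vs_diff: "x \<in> Vs n \<Longrightarrow> y \<in> Vs n \<Longrightarrow> (\<lambda>i. x i - y i) \<in> Vs n"
  by (auto simp: Vs_def)

lemma Vs_add: "x \<in> Vs n \<Longrightarrow> y \<in> Vs n \<Longrightarrow> (\<lambda>i. x i + y i) \<in> Vs n"
  by (auto simp: Vs_def)

lemma Vs_scale: "x \<in> Vs n \<Longrightarrow> (\<lambda>i. c * x i) \<in> Vs n"
  by (auto simp: Vs_def)

lemma tv_step:
  assumes v: "v \<in> Vs n" and v': "v' \<in> Vs n" and nz: "omg n v v' \<noteq> 0"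
  shows "\<exists>f. sympm n f \<and> f v = v' \<and> (\<forall>z. omg n v' z = omg n v z \<longrightarrow> f z = z)"
proof -
  define a where "a = (\<lambda>i. v' i - v i)"
  have aV: "a \<in> Vs n" using v v' by (simp add: a_def Vs_diff)
  have "omg n a v = omg n v' v" unfolding a_def omg_left_diff omg_self by simp
  also have "\<dots> = - omg n v v'" by (rule omg_antisym)
  finally have av: "omg n a v = - omg n v v'" .
  define c where "c = - 1 / omg n v v'"
  have "tv n a c v = v'"
    unfolding tv_def av c_def using nz by (auto simp: a_def)
  moreover have "tv n a c z = z" if "omg n v' z = omg n v z" for z
  proof -
    have "omg n a z = 0" unfolding a_def omg_left_diff using that by simp
    then show ?thesis by (simp add: tv_def)
  qed
  ultimately show ?thesis using tv_symp[OF aV] by blast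
qed


lemma Jp_0L: "1 \<le> n \<Longrightarrow> Jp n 0 (2*n-1) = 1" by (simp add: Jp_def)
lemma Jp_L0: "1 \<le> n \<Longrightarrow> Jp n (2*n-1) 0 = -1" by (simp add: Jp_def)

lemma omg_e0: "1 \<le> n \<Longrightarrow> omg n (uvec 0) y = y (2*n-1)"
  using omg_e_left[of 0 n y] Jp_0L[of n] by simp

lemma omg_eL: "1 \<le> n \<Longrightarrow> omg n (uvec (2*n-1)) y = - y 0"
  using omg_e_left[of "2*n-1" n y] Jp_L0[of n] by simp

lemma move2:
  assumes v: "v \<in> Vs n" and v': "v' \<in> Vs n" and z: "z \<in> Vs n"
    and nz1: "omg n v z \<noteq> 0" and nz2: "omg n z v' \<noteq> 0"
    and fx1: "omg n z e = omg n v e" and fx2: "omg n v' e = omg n z e"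
  shows "\<exists>f. sympm n f \<and> f v = v' \<and> f e = e"
proof -
  obtain f1 where f1: "sympm n f1" "f1 v = z" "\<forall>y. omg n z y = omg n v y \<longrightarrow> f1 y = y"
    using tv_step[OF v z nz1] by blast
  obtain f2 where f2: "sympm n f2" "f2 z = v'" "\<forall>y. omg n v' y = omg n z y \<longrightarrow> f2 y = y"
    using tv_step[OF z v' nz2] by blast
  show ?thesis
    using sympm_comp[OF f2(1) f1(1)] f1 f2 fx1 fx2 by auto
qed

lemma move2':
  assumes v: "v \<in> Vs n" and v': "v' \<in> Vs n" and z: "z \<in> Vs n"
    and nz1: "omg n v z \<noteq> 0" and nz2: "omg n z v' \<noteq> 0"
  shows "\<exists>f. sympm n f \<and> f v = v'"
proof -
  obtain f1 where f1: "sympm n f1" "f1 v = z"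
    using tv_step[OF v z nz1] by blast
  obtain f2 where f2: "sympm n f2" "f2 z = v'"
    using tv_step[OF z v' nz2] by blast
  show ?thesis
    using sympm_comp[OF f2(1) f1(1)] f1 f2 by auto
qed

lemma move1:
  assumes v: "v \<in> Vs n" and v': "v' \<in> Vs n" 
    and nz: "omg n v v' \<noteq> 0" and fx: "omg n v' e = omg n v e"
  shows "\<exists>f. sympm n f \<and> f v = v' \<and> f e = e"
  using tv_step[OF v v' nz] fx by blast

lemma Vs_nz: "u \<in> Vs n \<Longrightarrow> u \<noteq> (\<lambda>_. 0) \<Longrightarrow> \<exists>k<2*n. u k \<noteq> 0"
  by (auto simp: Vs_def) (meson not_less)

lemma Jp_pair_nz: "k < 2*n \<Longrightarrow> Jp n (2*n-1-k) k \<noteq> 0"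
  by (auto simp: Jp_def)

lemma stepA:
  assumes n: "1 \<le> n" and u: "u \<in> Vs n" and unz: "u \<noteq> (\<lambda>_. 0)"
  shows "\<exists>f. sympm n f \<and> f (uvec 0) = u"
proof -
  let ?e0 = "uvec 0" and ?eL = "uvec (2*n-1)"
  have e0V: "?e0 \<in> Vs n" and eLV: "?eL \<in> Vs n" using n by (auto intro: uvec_Vs)
  show ?thesis
  proof (cases "u (2*n-1) \<noteq> 0")
    case True
    then have "omg n ?e0 u \<noteq> 0" using omg_e0[OF n] by simp
    then show ?thesis using tv_step[OF e0V u] by blast
  next
    case False
    note F1 = False
    show ?thesis
    proof (cases "u 0 \<noteq> 0")
      case True
      have "omg n ?e0 ?eL \<noteq> 0" using omg_e0[OF n] n by (simp add: uvec_def)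
      moreover have "omg n ?eL u \<noteq> 0" using omg_eL[OF n] True by simp
      ultimately show ?thesis using move2'[OF e0V u eLV] by blast
    next
      case False
      obtain k where k: "k < 2*n" "u k \<noteq> 0" using Vs_nz[OF u unz] by blast
      have k0: "k \<noteq> 0" "k \<noteq> 2*n-1" using k F1 False by (metis, metis)
      define z where "z = (\<lambda>i. ?eL i + uvec (2*n-1-k) i)"
      have zV: "z \<in> Vs n" unfolding z_def using n k by (intro Vs_add uvec_Vs) auto
      have "omg n ?e0 z = 1" using omg_e0[OF n] k0 k by (simp add: z_def uvec_def)
      moreover have "omg n z u = - u 0 + Jp n (2*n-1-k) k * u k"
        using omg_left_lin[of n ?eL 1 "uvec (2*n-1-k)" u] omg_eL[OF n] omg_e_left[of "2*n-1-k" n u] k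
        by (simp add: z_def)
      then have "omg n z u \<noteq> 0" using False k Jp_pair_nz[OF k(1)] by simp
      ultimately show ?thesis using move2'[OF e0V u zV] by auto
    qed
  qed
qed

lemma stepB:
  assumes n: "1 \<le> n" and w: "w \<in> Vs n" and om1: "omg n (uvec 0) w = 1"
  shows "\<exists>f. sympm n f \<and> f (uvec (2*n-1)) = w \<and> f (uvec 0) = uvec 0"
proof -
  let ?e0 = "uvec 0" and ?eL = "uvec (2*n-1)"
  have e0V: "?e0 \<in> Vs n" and eLV: "?eL \<in> Vs n" using n by (auto intro: uvec_Vs)
  have we0: "omg n w ?e0 = -1" using om1 omg_antisym[of n w ?e0] by simp
  have eLe0: "omg n ?eL ?e0 = -1" using omg_eL[OF n] by (simp add: uvec_def)
  have e0e0: "omg n ?e0 ?e0 = 0" by (rule omg_self)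
  show ?thesis
  proof (cases "omg n ?eL w \<noteq> 0")
    case True
    then show ?thesis using move1[OF eLV w True, of ?e0] we0 eLe0 by auto
  next
    case False
    define z where "z = (\<lambda>i. ?eL i + 1 * ?e0 i)"
    have zV: "z \<in> Vs n" unfolding z_def using n by (intro Vs_add Vs_scale uvec_Vs) auto
    have "omg n ?eL z = -1" unfolding z_def omg_right_lin omg_self using omg_antisym[of n ?eL ?e0] eLe0
      by simp
    moreover have "omg n z w = 1" unfolding z_def omg_left_lin using False om1 by simp
    moreover have "omg n z ?e0 = -1" unfolding z_def omg_left_lin using eLe0 e0e0 by simp
    ultimately show ?thesis using move2[OF eLV w zV, of ?e0] we0 eLe0 by auto
  qed
qed

lemma transitive:
  assumes n: "1 \<le> n" and u: "u \<in> Vs n" and w: "w \<in> Vs n" and om1: "omg n u w = 1"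
  shows "\<exists>f. sympm n f \<and> f (uvec 0) = u \<and> f (uvec (2*n-1)) = w"
proof -
  have "u \<noteq> (\<lambda>_. 0)" using om1 by (auto simp: omg_def)
  then obtain f1 where f1: "sympm n f1" "f1 (uvec 0) = u" using stepA[OF n u] by blast
  obtain f1' where f1': "\<forall>v\<in>Vs n. f1' v \<in> Vs n" "\<forall>v\<in>Vs n. f1 (f1' v) = v"
    using f1(1) by (auto simp: sympm_def)
  define w' where "w' = f1' w"
  have w'V: "w' \<in> Vs n" using f1' w by (simp add: w'_def)
  have "omg n (uvec 0) w' = omg n (f1 (uvec 0)) (f1 w')"
    using f1(1) w'V uvec_Vs[of 0 n] n unfolding sympm_def by auto
  also have "\<dots> = 1" using f1 f1' w om1 by (simp add: w'_def)
  finally obtain f2 where f2: "sympm n f2" "f2 (uvec (2*n-1)) = w'" "f2 (uvec 0) = uvec 0"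
    using stepB[OF n w'V] by blast
  have "f1 w' = w" using f1' w by (simp add: w'_def)
  then show ?thesis using sympm_comp[OF f1(1) f2(1)] f1 f2 by auto
qed

lemma omg_uvec_uvec: "i < 2*n \<Longrightarrow> j < 2*n \<Longrightarrow> omg n (uvec i) (uvec j) = Jp n i j"
  using omg_e_left[of i n "uvec j"] Jp_nz[of i n j] by (auto simp: uvec_def)

lemma sympm_matrix:
  assumes f: "sympm n f"
  shows "(\<lambda>i a. f (uvec a) i) \<in> sp_group n
    \<and> (\<exists>h. \<forall>i<2*n. \<forall>j<2*n. (\<Sum>a<2*n. f (uvec a) i * h a j) = (if i = j then 1 else 0))"
proof
  show "(\<lambda>i a. f (uvec a) i) \<in> sp_group n"
    unfolding sp_group_def
  proof (intro CollectI allI impI)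
    fix i j assume ij: "i < 2*n" "j < 2*n"
    have "(\<Sum>a<2*n. \<Sum>b<2*n. f (uvec i) a * Jp n a b * f (uvec j) b) = omg n (f (uvec i)) (f (uvec j))"
      by (simp add: omg_def)
    also have "\<dots> = omg n (uvec i) (uvec j)" using f ij uvec_Vs unfolding sympm_def by blast
    also have "\<dots> = Jp n i j" using ij by (rule omg_uvec_uvec)
    finally show "(\<Sum>a<2*n. \<Sum>b<2*n. f (uvec i) a * Jp n a b * f (uvec j) b) = Jp n i j" .
  qed
next
  obtain f' where f': "\<forall>v\<in>Vs n. f' v \<in> Vs n" "\<forall>v\<in>Vs n. f (f' v) = v"
    using f by (auto simp: sympm_def)
  have rep: "\<And>v i. v \<in> Vs n \<Longrightarrow> f v i = (\<Sum>b<2*n. v b * f (uvec b) i)" using f by (auto simp: sympm_def)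
  show "\<exists>h. \<forall>i<2*n. \<forall>j<2*n. (\<Sum>a<2*n. f (uvec a) i * h a j) = (if i = j then 1 else 0)"
  proof (intro exI allI impI)
    fix i j assume ij: "i < 2*n" "j < 2*n"
    have "(\<Sum>a<2*n. f (uvec a) i * f' (uvec j) a) = f (f' (uvec j)) i"
      using rep[of "f' (uvec j)" i] f' uvec_Vs[OF ij(2)] by (simp add: mult.commute)
    also have "\<dots> = (if i = j then 1 else 0)" using f' uvec_Vs[OF ij(2)] by (simp add: uvec_def)
    finally show "(\<Sum>a<2*n. f (uvec a) i * f' (uvec j) a) = (if i = j then 1 else 0)" .
  qed
qed


definition sg :: "nat \<Rightarrow> nat \<Rightarrow> complex" where
  "sg n j = (if j < n then 1 else -1)"

lemma sg_sq: "sg n j * sg n j = 1" by (simp add: sg_def)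

lemma Jp_pair: "j < 2*n \<Longrightarrow> Jp n (2*n-1-j) j = - sg n j"
  by (auto simp: Jp_def sg_def)

lemma key_K:
  assumes g: "g \<in> sp_group n"
    and gh: "\<forall>i<2*n. \<forall>j<2*n. (\<Sum>a<2*n. g i a * h a j) = (if i = j then 1 else 0)"
    and ij: "i < 2*n" "j < 2*n"
  shows "(\<Sum>b<2*n. g b i * Jp n b j) = (\<Sum>b<2*n. Jp n i b * h b j)"
proof -
  have sp: "\<And>b. b < 2*n \<Longrightarrow> (\<Sum>c<2*n. \<Sum>d<2*n. g c i * Jp n c d * g d b) = Jp n i b"
    using g ij unfolding sp_group_def by auto
  have "(\<Sum>b<2*n. Jp n i b * h b j) = (\<Sum>b<2*n. (\<Sum>c<2*n. \<Sum>d<2*n. g c i * Jp n c d * g d b) * h b j)"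
    by (intro sum.cong refl) (simp add: sp)
  also have "\<dots> = (\<Sum>b<2*n. \<Sum>c<2*n. \<Sum>d<2*n. (g c i * Jp n c d) * (g d b * h b j))"
    by (simp add: sum_distrib_right mult.assoc)
  also have "\<dots> = (\<Sum>c<2*n. \<Sum>b<2*n. \<Sum>d<2*n. (g c i * Jp n c d) * (g d b * h b j))"
    by (rule sum.swap)
  also have "\<dots> = (\<Sum>c<2*n. \<Sum>d<2*n. \<Sum>b<2*n. (g c i * Jp n c d) * (g d b * h b j))"
    by (rule sum.cong[OF refl]) (rule sum.swap)
  also have "\<dots> = (\<Sum>c<2*n. \<Sum>d<2*n. (g c i * Jp n c d) * (\<Sum>b<2*n. g d b * h b j))"
    by (simp add: sum_distrib_left)
  also have "\<dots> = (\<Sum>c<2*n. \<Sum>d<2*n. (g c i * Jp n c d) * (if d = j then 1 else 0))"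
    using gh ij by (intro sum.cong refl) simp
  also have "\<dots> = (\<Sum>c<2*n. g c i * Jp n c j)"
    using ij by (intro sum.cong refl) (simp add: sum.delta' if_distrib cong: if_cong)
  finally show ?thesis by simp
qed

lemma h_rows:
  assumes n: "1 \<le> n" and g: "g \<in> sp_group n"
    and gh: "\<forall>i<2*n. \<forall>j<2*n. (\<Sum>a<2*n. g i a * h a j) = (if i = j then 1 else 0)"
    and j: "j < 2*n"
  shows "h 0 j = sg n j * g (2*n-1-j) (2*n-1)" "h (2*n-1) j = - sg n j * g (2*n-1-j) 0"
proof -
  have L: "2*n-1 < 2*n" using n by simp
  have "(\<Sum>b<2*n. g b (2*n-1) * Jp n b j) = (\<Sum>b<2*n. Jp n (2*n-1) b * h b j)"
    using key_K[OF g gh L j] .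
  moreover have "(\<Sum>b<2*n. g b (2*n-1) * Jp n b j) = g (2*n-1-j) (2*n-1) * Jp n (2*n-1-j) j"
    by (rule sum_Jp_left[OF j])
  moreover have "(\<Sum>b<2*n. Jp n (2*n-1) b * h b j) = Jp n (2*n-1) 0 * h 0 j"
    using sum_Jp_right[OF L, of "\<lambda>b. h b j"] n by simp
  ultimately have "- h 0 j = - sg n j * g (2*n-1-j) (2*n-1)"
    using Jp_pair[OF j] Jp_L0[OF n] by (simp add: mult.commute)
  then show "h 0 j = sg n j * g (2*n-1-j) (2*n-1)" by (simp add: mult.commute)
  have Z: "0 < 2*n" using n by simp
  have "(\<Sum>b<2*n. g b 0 * Jp n b j) = (\<Sum>b<2*n. Jp n 0 b * h b j)"
    using key_K[OF g gh Z j] .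
  moreover have "(\<Sum>b<2*n. g b 0 * Jp n b j) = g (2*n-1-j) 0 * Jp n (2*n-1-j) j"
    by (rule sum_Jp_left[OF j])
  moreover have "(\<Sum>b<2*n. Jp n 0 b * h b j) = Jp n 0 (2*n-1) * h (2*n-1) j"
    using sum_Jp_right[OF Z, of "\<lambda>b. h b j"] by simp
  ultimately show "h (2*n-1) j = - sg n j * g (2*n-1-j) 0"
    using Jp_pair[OF j] Jp_0L[OF n] by (simp add: mult.commute)
qed

lemma M0_sum:
  assumes n: "1 \<le> n" and i: "i < 2*n" and j: "j < 2*n"
  shows "(\<Sum>a<2*n. \<Sum>b<2*n. g i a * M0 n (a, b) * h b j) = g i 0 * h 0 j - g i (2*n-1) * h (2*n-1) j"
proof -
  let ?L = "2*n-1"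
  have L: "?L \<noteq> 0" "?L < 2*n" "0 < 2*n" using n by auto
  have e: "M0 n (a, b) = uvec 0 a * uvec 0 b - uvec ?L a * uvec ?L b" for a b
    using L by (auto simp: M0_def uvec_def)
  have "(\<Sum>a<2*n. \<Sum>b<2*n. g i a * M0 n (a, b) * h b j) =
     (\<Sum>a<2*n. \<Sum>b<2*n. (g i a * uvec 0 a) * (uvec 0 b * h b j)) - (\<Sum>a<2*n. \<Sum>b<2*n. (g i a * uvec ?L a) * (uvec ?L b * h b j))"
    unfolding e by (simp add: algebra_simps sum_subtractf)
  also have "\<dots> = (\<Sum>a<2*n. g i a * uvec 0 a) * (\<Sum>b<2*n. uvec 0 b * h b j) - (\<Sum>a<2*n. g i a * uvec ?L a) * (\<Sum>b<2*n. uvec ?L b * h b j)"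
    by (simp add: sum_product)
  also have "\<dots> = g i 0 * h 0 j - g i ?L * h ?L j"
    using L by (simp only: sum_uvec_l sum_uvec_r)
  finally show ?thesis .
qed

lemma triple: "(\<Sum>a\<in>A. \<Sum>b\<in>B. \<Sum>c\<in>C. p a * q b * r c) = sum p A * sum q B * (sum r C :: complex)"
proof -
  have e: "sum q B * sum r C = (\<Sum>b\<in>B. \<Sum>c\<in>C. q b * r c)" by (rule sum_product)
  have "sum p A * sum q B * sum r C = sum p A * (\<Sum>b\<in>B. \<Sum>c\<in>C. q b * r c)"
    by (simp only: mult.assoc e)
  also have "\<dots> = (\<Sum>a\<in>A. p a * (\<Sum>b\<in>B. \<Sum>c\<in>C. q b * r c))"
    by (rule sum_distrib_right)
  also have "\<dots> = (\<Sum>a\<in>A. \<Sum>b\<in>B. \<Sum>c\<in>C. p a * (q b * r c))"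
    by (intro sum.cong refl) (simp add: sum_distrib_left)
  finally show ?thesis by (simp only: mult.assoc)
qed

lemma T0_sum:
  assumes n: "1 \<le> n"
  shows "(\<Sum>a<2*n. \<Sum>b<2*n. \<Sum>c<2*n. g i a * g j b * g k c * T0 n A B (a, b, c))
     = A * (g i 0 * g j 0 * g k 0) + B * (g i (2*n-1) * g j (2*n-1) * g k (2*n-1))"
proof -
  let ?L = "2*n-1"
  have L: "?L \<noteq> 0" "?L < 2*n" "0 < 2*n" using n by auto
  have e: "g i a * g j b * g k c * T0 n A B (a, b, c) = A * ((g i a * uvec 0 a) * (g j b * uvec 0 b) * (g k c * uvec 0 c))
      + B * ((g i a * uvec ?L a) * (g j b * uvec ?L b) * (g k c * uvec ?L c))" for a b c
    using L by (auto simp: T0_def uvec_def)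
  have "(\<Sum>a<2*n. \<Sum>b<2*n. \<Sum>c<2*n. g i a * g j b * g k c * T0 n A B (a, b, c)) =
     A * (\<Sum>a<2*n. \<Sum>b<2*n. \<Sum>c<2*n. (g i a * uvec 0 a) * (g j b * uvec 0 b) * (g k c * uvec 0 c))
   + B * (\<Sum>a<2*n. \<Sum>b<2*n. \<Sum>c<2*n. (g i a * uvec ?L a) * (g j b * uvec ?L b) * (g k c * uvec ?L c))"
    unfolding e by (simp only: sum.distrib sum_distrib_left)
  also have "\<dots> = A * ((\<Sum>a<2*n. g i a * uvec 0 a) * (\<Sum>b<2*n. g j b * uvec 0 b) * (\<Sum>c<2*n. g k c * uvec 0 c))
     + B * ((\<Sum>a<2*n. g i a * uvec ?L a) * (\<Sum>b<2*n. g j b * uvec ?L b) * (\<Sum>c<2*n. g k c * uvec ?L c))"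
    by (simp only: triple)
  also have "\<dots> = A * (g i 0 * g j 0 * g k 0) + B * (g i ?L * g j ?L * g k ?L)"
    using L by (simp only: sum_uvec_r)
  finally show ?thesis .
qed


definition PiM :: "nat \<Rightarrow> (nat \<Rightarrow> complex) \<Rightarrow> (nat \<Rightarrow> complex) \<Rightarrow> nat \<times> nat \<Rightarrow> complex" where
  "PiM n u w = (\<lambda>(i, j). if i < 2*n \<and> j < 2*n then sg n j * (u i * w (2*n-1-j) + w i * u (2*n-1-j)) else 0)"

definition PiT :: "nat \<Rightarrow> complex \<Rightarrow> (nat \<Rightarrow> complex) \<Rightarrow> (nat \<Rightarrow> complex) \<Rightarrow> nat \<times> nat \<times> nat \<Rightarrow> complex" where
  "PiT n cc u w = (\<lambda>(i, j, k). if i < 2*n \<and> j < 2*n \<and> k < 2*n then cc * (u i * u j * u k + w i * w j * w k) else 0)"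

definition PiF :: "nat \<Rightarrow> complex \<Rightarrow> (nat \<Rightarrow> complex) \<Rightarrow> (nat \<Rightarrow> complex) \<Rightarrow> ((nat \<times> nat) + (nat \<times> nat \<times> nat) \<Rightarrow> complex)" where
  "PiF n cc u w = pt (PiM n u w) (PiT n cc u w)"

lemma PiF_local:
  assumes "\<forall>i<2*n. u i = u' i \<and> w i = w' i"
  shows "PiF n cc u w = PiF n cc u' w'"
proof -
  have "PiM n u w = PiM n u' w'" using assms by (auto simp: PiM_def fun_eq_iff)
  moreover have "PiT n cc u w = PiT n cc u' w'" using assms by (auto simp: PiT_def fun_eq_iff)
  ultimately show ?thesis by (simp add: PiF_def)
qed

definition orb_el :: "nat \<Rightarrow> complex \<Rightarrow> complex \<Rightarrow> (nat \<Rightarrow> nat \<Rightarrow> complex) \<Rightarrow> (nat \<Rightarrow> nat \<Rightarrow> complex) \<Rightarrow> complex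
   \<Rightarrow> ((nat \<times> nat) + (nat \<times> nat \<times> nat) \<Rightarrow> complex)" where
  "orb_el n A B g h t = pt (\<lambda>(i, j). if i < 2*n \<and> j < 2*n then
                     t^2 * (\<Sum>a<2*n. \<Sum>b<2*n. g i a * M0 n (a, b) * h b j) else 0)
         (\<lambda>(i, j, k). if i < 2*n \<and> j < 2*n \<and> k < 2*n then
                     t^3 * (\<Sum>a<2*n. \<Sum>b<2*n. \<Sum>c<2*n. g i a * g j b * g k c * T0 n A B (a, b, c))
                   else 0)"

lemma sp_orbit_alt: "sp_orbit n (M0 n) (T0 n A B) = {orb_el n A B g h t | g h t. g \<in> sp_group n
          \<and> (\<forall>i<2*n. \<forall>j<2*n. (\<Sum>a<2*n. g i a * h a j) = (if i = j then 1 else 0))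
          \<and> t \<noteq> 0}"
  unfolding sp_orbit_def orb_el_def by simp

lemma orb_el_Pi:
  assumes n: "1 \<le> n" and g: "g \<in> sp_group n"
    and gh: "\<forall>i<2*n. \<forall>j<2*n. (\<Sum>a<2*n. g i a * h a j) = (if i = j then 1 else 0)"
    and ab: "\<alpha> * \<beta> = 1" "cc * \<alpha>^3 = A" "cc * \<beta>^3 = B"
  shows "orb_el n A B g h t = PiF n cc (\<lambda>i. \<alpha> * t * g i 0) (\<lambda>i. \<beta> * t * g i (2*n-1))"
proof -
  let ?L = "2*n-1"
  have M: "t^2 * (\<Sum>a<2*n. \<Sum>b<2*n. g i a * M0 n (a, b) * h b j) =
      sg n j * ((\<alpha> * t * g i 0) * (\<beta> * t * g (2*n-1-j) ?L) + (\<beta> * t * g i ?L) * (\<alpha> * t * g (2*n-1-j) 0))"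
    if ij: "i < 2*n" "j < 2*n" for i j
  proof -
    have "t^2 * (\<Sum>a<2*n. \<Sum>b<2*n. g i a * M0 n (a, b) * h b j) = t^2 * (g i 0 * h 0 j - g i ?L * h ?L j)"
      using M0_sum[OF n ij] by simp
    also have "\<dots> = t^2 * (g i 0 * (sg n j * g (2*n-1-j) ?L) - g i ?L * (- sg n j * g (2*n-1-j) 0))"
      using h_rows[OF n g gh ij(2)] by simp
    also have "\<dots> = sg n j * ((\<alpha> * \<beta>) * t^2 * (g i 0 * g (2*n-1-j) ?L + g i ?L * g (2*n-1-j) 0))"
      using ab by (simp add: algebra_simps)
    also have "\<dots> = sg n j * ((\<alpha> * t * g i 0) * (\<beta> * t * g (2*n-1-j) ?L) + (\<beta> * t * g i ?L) * (\<alpha> * t * g (2*n-1-j) 0))"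
      by (simp add: algebra_simps power2_eq_square)
    finally show ?thesis .
  qed
  have T: "t^3 * (\<Sum>a<2*n. \<Sum>b<2*n. \<Sum>c<2*n. g i a * g j b * g k c * T0 n A B (a, b, c)) =
     cc * ((\<alpha> * t * g i 0) * (\<alpha> * t * g j 0) * (\<alpha> * t * g k 0) + (\<beta> * t * g i ?L) * (\<beta> * t * g j ?L) * (\<beta> * t * g k ?L))"
    for i j k
  proof -
    have "t^3 * (\<Sum>a<2*n. \<Sum>b<2*n. \<Sum>c<2*n. g i a * g j b * g k c * T0 n A B (a, b, c)) =
       t^3 * (A * (g i 0 * g j 0 * g k 0) + B * (g i ?L * g j ?L * g k ?L))"
      by (simp only: T0_sum[OF n])
    also have "\<dots> = t^3 * ((cc * \<alpha>^3) * (g i 0 * g j 0 * g k 0) + (cc * \<beta>^3) * (g i ?L * g j ?L * g k ?L))"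
      using ab by simp
    also have "\<dots> = cc * ((\<alpha> * t * g i 0) * (\<alpha> * t * g j 0) * (\<alpha> * t * g k 0) + (\<beta> * t * g i ?L) * (\<beta> * t * g j ?L) * (\<beta> * t * g k ?L))"
      by (simp add: algebra_simps power3_eq_cube)
    finally show ?thesis .
  qed
  show ?thesis
    unfolding orb_el_def PiF_def pt_def
  proof (rule ext)
    fix z :: "(nat \<times> nat) + (nat \<times> nat \<times> nat)"
    show "case_sum (\<lambda>(i, j). if i < 2*n \<and> j < 2*n then t^2 * (\<Sum>a<2*n. \<Sum>b<2*n. g i a * M0 n (a, b) * h b j) else 0)
          (\<lambda>(i, j, k). if i < 2*n \<and> j < 2*n \<and> k < 2*n then t^3 * (\<Sum>a<2*n. \<Sum>b<2*n. \<Sum>c<2*n. g i a * g j b * g k c * T0 n A B (a, b, c)) else 0) z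
        = case_sum (PiM n (\<lambda>i. \<alpha> * t * g i 0) (\<lambda>i. \<beta> * t * g i ?L)) (PiT n cc (\<lambda>i. \<alpha> * t * g i 0) (\<lambda>i. \<beta> * t * g i ?L)) z"
    proof (cases z)
      case (Inl p)
      then show ?thesis using M by (cases p) (simp add: PiM_def)
    next
      case (Inr p)
      then show ?thesis using T by (cases p) (simp add: PiT_def)
    qed
  qed
qed


lemma om4: "om^4 = om" using om3 by algebra

definition ri :: "nat \<Rightarrow> nat \<Rightarrow> bool \<Rightarrow> nat" where "ri n k b = (if b then n + k else k)"
definition kk :: "nat \<Rightarrow> nat \<Rightarrow> nat" where "kk n r = (if r < n then r else r - n)"
definition bb :: "nat \<Rightarrow> nat \<Rightarrow> bool" where "bb n r = (n \<le> r)"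

definition uc :: "nat \<Rightarrow> (nat \<times> bool \<times> nat \<Rightarrow> complex) \<Rightarrow> nat \<Rightarrow> complex" where
  "uc n x r = (if r < 2*n then (x (kk n r, bb n r, 0) + om^2 * x (kk n r, bb n r, 1) + om * x (kk n r, bb n r, 2)) / 3 else 0)"
definition wc :: "nat \<Rightarrow> (nat \<times> bool \<times> nat \<Rightarrow> complex) \<Rightarrow> nat \<Rightarrow> complex" where
  "wc n x r = (if r < 2*n then (x (kk n r, bb n r, 0) + om * x (kk n r, bb n r, 1) + om^2 * x (kk n r, bb n r, 2)) / 3 else 0)"

definition xs :: "nat \<Rightarrow> (nat \<Rightarrow> complex) \<Rightarrow> (nat \<Rightarrow> complex) \<Rightarrow> nat \<times> bool \<times> nat \<Rightarrow> complex" where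
  "xs n u w = (\<lambda>(k, b, c). if k < n \<and> c < 3 then om^c * u (ri n k b) + om^(2*c) * w (ri n k b) else 0)"

definition piX :: "nat \<Rightarrow> complex \<Rightarrow> (nat \<times> bool \<times> nat \<Rightarrow> complex) \<Rightarrow> ((nat \<times> nat) + (nat \<times> nat \<times> nat) \<Rightarrow> complex)" where
  "piX n cc x = PiF n cc (uc n x) (wc n x)"

lemma ri_lt: "k < n \<Longrightarrow> ri n k b < 2*n" by (auto simp: ri_def)
lemma kk_ri: "k < n \<Longrightarrow> kk n (ri n k b) = k" by (auto simp: ri_def kk_def)
lemma bb_ri: "k < n \<Longrightarrow> bb n (ri n k b) = b" by (auto simp: ri_def bb_def)
lemma ri_kk: "r < 2*n \<Longrightarrow> ri n (kk n r) (bb n r) = r" by (auto simp: ri_def kk_def bb_def)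
lemma kk_lt: "r < 2*n \<Longrightarrow> kk n r < n" by (auto simp: kk_def)

lemma xs_refl: "xs n u w \<in> refl_space n"
proof -
  have "u + w + (om * u + om^2 * w) + (om^2 * u + om^4 * w) = (1 + om + om^2) * u + (1 + om + om^2) * w" for u w :: complex
    using om3 by algebra
  then show ?thesis
    unfolding refl_space_def xs_def using om_sum
    by (auto simp: power_mult[symmetric] eval_nat_numeral)
qed

lemma uc_xs: "r < 2*n \<Longrightarrow> uc n (xs n u w) r = u r"
proof -
  assume r: "r < 2*n"
  have k: "kk n r < n" using kk_lt[OF r] .
  have "((u r + w r) + om^2 * (om * u r + om^2 * w r) + om * (om^2 * u r + om^4 * w r)) / 3 = u r"
  proof -
    have "(u r + w r) + om^2 * (om * u r + om^2 * w r) + om * (om^2 * u r + om^4 * w r) = 3 * u r + (1 + om + om^2) * w r"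
      using om3 by algebra
    then show ?thesis using om_sum by simp
  qed
  then show ?thesis using r k by (simp add: uc_def xs_def ri_kk eval_nat_numeral)
qed


lemma wc_xs: "r < 2*n \<Longrightarrow> wc n (xs n u w) r = w r"
proof -
  assume r: "r < 2*n"
  have k: "kk n r < n" using kk_lt[OF r] .
  have "((u r + w r) + om * (om * u r + om^2 * w r) + om^2 * (om^2 * u r + om^4 * w r)) / 3 = w r"
  proof -
    have "(u r + w r) + om * (om * u r + om^2 * w r) + om^2 * (om^2 * u r + om^4 * w r) = 3 * w r + (1 + om + om^2) * u r"
      using om3 by algebra
    then show ?thesis using om_sum by simp
  qed
  then show ?thesis using r k by (simp add: wc_def xs_def ri_kk eval_nat_numeral)
qed

lemma uc_Vs: "uc n x \<in> Vs n" by (simp add: uc_def Vs_def)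
lemma wc_Vs: "wc n x \<in> Vs n" by (simp add: wc_def Vs_def)

lemma xs_uc:
  assumes x: "x \<in> refl_space n"
  shows "xs n (uc n x) (wc n x) = x"
proof (rule ext, clarify)
  fix k b c
  show "xs n (uc n x) (wc n x) (k, b, c) = x (k, b, c)"
  proof (cases "k < n \<and> c < 3")
    case False
    then show ?thesis using x by (auto simp: xs_def refl_space_def)
  next
    case True
    then have k: "k < n" and c: "c < 3" by auto
    have r: "ri n k b < 2*n" using ri_lt[OF k] .
    have s: "x (k, b, 0) + x (k, b, 1) + x (k, b, 2) = 0" using x k by (simp add: refl_space_def)
    define x0 where "x0 = x (k, b, 0)"
    define x1 where "x1 = x (k, b, 1)"
    define x2 where "x2 = x (k, b, 2)"
    have s': "x0 + x1 + x2 = 0" using s by (simp add: x0_def x1_def x2_def)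
    have U: "uc n x (ri n k b) = (x0 + om^2 * x1 + om * x2) / 3"
      using r k by (simp add: uc_def kk_ri bb_ri x0_def x1_def x2_def)
    have W: "wc n x (ri n k b) = (x0 + om * x1 + om^2 * x2) / 3"
      using r k by (simp add: wc_def kk_ri bb_ri x0_def x1_def x2_def)
    define U where "U = uc n x (ri n k b)"
    define W where "W = wc n x (ri n k b)"
    have U3: "3 * U = x0 + om^2 * x1 + om * x2" using U by (simp add: U_def mult.commute)
    have W3: "3 * W = x0 + om * x1 + om^2 * x2" using W by (simp add: W_def mult.commute)
    have "c = 0 \<or> c = 1 \<or> c = 2" using c by auto
    moreover have "U + W = x0" using s' U3 W3 om_sum by algebra
    moreover have "om * U + om^2 * W = x1" using s' U3 W3 om_sum om3 by algebra
    moreover have "om^2 * U + om^4 * W = x2" using s' U3 W3 om_sum om3 by algebra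
    ultimately show ?thesis using k c
      by (auto simp: xs_def U_def W_def x0_def x1_def x2_def)
  qed
qed

lemma PiF_scale:
  assumes "c1 * c2 = 1" "c1^3 = 1"
  shows "PiF n cc (\<lambda>i. c1 * u i) (\<lambda>i. c2 * w i) = PiF n cc u w"
proof -
  have c2: "c2^3 = 1" using assms by algebra
  have "PiM n (\<lambda>i. c1 * u i) (\<lambda>i. c2 * w i) = PiM n u w"
  proof -
    have "c1 * a * (c2 * b) + c2 * d * (c1 * e) = a * b + d * e" for a b d e
      using assms(1) by algebra
    then show ?thesis unfolding PiM_def by (simp only:)
  qed
  moreover have "PiT n cc (\<lambda>i. c1 * u i) (\<lambda>i. c2 * w i) = PiT n cc u w"
  proof -
    have "c1 * a * (c1 * b) * (c1 * d) + c2 * e * (c2 * f) * (c2 * g) = a * b * d + e * f * g" for a b d e f g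
      using assms(2) c2 by algebra
    then show ?thesis unfolding PiT_def by (simp only:)
  qed
  ultimately show ?thesis by (simp add: PiF_def)
qed

lemma PiF_swap: "PiF n cc w u = PiF n cc u w"
proof -
  have "PiM n w u = PiM n u w" by (auto simp: PiM_def fun_eq_iff algebra_simps)
  moreover have "PiT n cc w u = PiT n cc u w" by (auto simp: PiT_def fun_eq_iff algebra_simps)
  ultimately show ?thesis by (simp add: PiF_def)
qed

lemma perm3:
  assumes p: "p permutes {0, 1, 2::nat}"
  shows "(p 0 = 0 \<and> p 1 = 1 \<and> p 2 = 2) \<or> (p 0 = 1 \<and> p 1 = 2 \<and> p 2 = 0) \<or> (p 0 = 2 \<and> p 1 = 0 \<and> p 2 = 1)
    \<or> (p 0 = 0 \<and> p 1 = 2 \<and> p 2 = 1) \<or> (p 0 = 1 \<and> p 1 = 0 \<and> p 2 = 2) \<or> (p 0 = 2 \<and> p 1 = 1 \<and> p 2 = 0)"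
proof -
  have r: "p 0 \<in> {0,1,2}" "p 1 \<in> {0,1,2}" "p 2 \<in> {0,1,2}"
    using permutes_in_image[OF p] by auto
  have i: "p 0 \<noteq> p 1" "p 0 \<noteq> p 2" "p 1 \<noteq> p 2"
    using permutes_inj[OF p] by (auto dest: injD)
  show ?thesis using r i by (simp only: insert_iff empty_iff) (elim disjE; simp)
qed


lemma act_uc: "uc n (\<lambda>(k, b, c). x (k, b, p c)) r =
   (if r < 2*n then (x (kk n r, bb n r, p 0) + om^2 * x (kk n r, bb n r, p 1) + om * x (kk n r, bb n r, p 2)) / 3 else 0)"
  by (simp add: uc_def)

lemma act_wc: "wc n (\<lambda>(k, b, c). x (k, b, p c)) r =
   (if r < 2*n then (x (kk n r, bb n r, p 0) + om * x (kk n r, bb n r, p 1) + om^2 * x (kk n r, bb n r, p 2)) / 3 else 0)"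
  by (simp add: wc_def)

lemma uw_act:
  assumes p: "p permutes {0, 1, 2::nat}"
  shows "\<exists>c1 c2. c1 * c2 = 1 \<and> c1^3 = 1 \<and>
    ((\<forall>r. uc n (\<lambda>(k, b, c). x (k, b, p c)) r = c1 * uc n x r \<and> wc n (\<lambda>(k, b, c). x (k, b, p c)) r = c2 * wc n x r)
   \<or> (\<forall>r. uc n (\<lambda>(k, b, c). x (k, b, p c)) r = c1 * wc n x r \<and> wc n (\<lambda>(k, b, c). x (k, b, p c)) r = c2 * uc n x r))"
proof -
  have o1: "om * om^2 = 1" using om3 by algebra
  have o2: "om^2 * om = 1" using om3 by algebra
  have o3: "(om^2)^3 = 1" using om3 by algebra
  have id1: "a1 + om^2 * a2 + om * a0 = om * (a0 + om^2 * a1 + om * a2)"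
            "a1 + om * a2 + om^2 * a0 = om^2 * (a0 + om * a1 + om^2 * a2)"
            "a2 + om^2 * a0 + om * a1 = om^2 * (a0 + om^2 * a1 + om * a2)"
            "a2 + om * a0 + om^2 * a1 = om * (a0 + om * a1 + om^2 * a2)"
            "a1 + om^2 * a0 + om * a2 = om^2 * (a0 + om * a1 + om^2 * a2)"
            "a1 + om * a0 + om^2 * a2 = om * (a0 + om^2 * a1 + om * a2)"
            "a2 + om^2 * a1 + om * a0 = om * (a0 + om * a1 + om^2 * a2)"
            "a2 + om * a1 + om^2 * a0 = om^2 * (a0 + om^2 * a1 + om * a2)"
    for a0 a1 a2 :: complex using om3 by algebra+
  define X where "X = (\<lambda>r c. x (kk n r, bb n r, c))"
  have U': "uc n (\<lambda>(k, b, c). x (k, b, p c)) r = (if r < 2*n then (X r (p 0) + om^2 * X r (p 1) + om * X r (p 2)) / 3 else 0)"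
    "uc n x r = (if r < 2*n then (X r 0 + om^2 * X r 1 + om * X r 2) / 3 else 0)" for r
    by (simp_all add: X_def uc_def)
  have W': "wc n (\<lambda>(k, b, c). x (k, b, p c)) r = (if r < 2*n then (X r (p 0) + om * X r (p 1) + om^2 * X r (p 2)) / 3 else 0)"
    "wc n x r = (if r < 2*n then (X r 0 + om * X r 1 + om^2 * X r 2) / 3 else 0)" for r
    by (simp_all add: X_def wc_def)
  from perm3[OF p] show ?thesis
  proof (elim disjE conjE)
    assume "p 0 = 0" "p 1 = 1" "p 2 = 2"
    then show ?thesis by (intro exI[of _ 1]) (simp add: U' W')
  next
    assume asm: "p 0 = 1" "p 1 = 2" "p 2 = 0"
    have "\<forall>r. uc n (\<lambda>(k, b, c). x (k, b, p c)) r = om * uc n x r \<and> wc n (\<lambda>(k, b, c). x (k, b, p c)) r = om^2 * wc n x r"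
    proof
      fix r show "uc n (\<lambda>(k, b, c). x (k, b, p c)) r = om * uc n x r \<and> wc n (\<lambda>(k, b, c). x (k, b, p c)) r = om^2 * wc n x r"
        using id1(1)[of "X r 1" "X r 2" "X r 0"] id1(2)[of "X r 1" "X r 2" "X r 0"] asm by (simp add: U' W')
    qed
    then show ?thesis using o1 om3 by blast
  next
    assume asm: "p 0 = 2" "p 1 = 0" "p 2 = 1"
    have "\<forall>r. uc n (\<lambda>(k, b, c). x (k, b, p c)) r = om^2 * uc n x r \<and> wc n (\<lambda>(k, b, c). x (k, b, p c)) r = om * wc n x r"
    proof
      fix r show "uc n (\<lambda>(k, b, c). x (k, b, p c)) r = om^2 * uc n x r \<and> wc n (\<lambda>(k, b, c). x (k, b, p c)) r = om * wc n x r"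
        using id1(3)[of "X r 2" "X r 0" "X r 1"] id1(4)[of "X r 2" "X r 0" "X r 1"] asm by (simp add: U' W')
    qed
    then show ?thesis using o2 o3 by blast
  next
    assume "p 0 = 0" "p 1 = 2" "p 2 = 1"
    then show ?thesis by (intro exI[of _ 1]) (simp add: U' W' add.commute add.left_commute)
  next
    assume asm: "p 0 = 1" "p 1 = 0" "p 2 = 2"
    have "\<forall>r. uc n (\<lambda>(k, b, c). x (k, b, p c)) r = om^2 * wc n x r \<and> wc n (\<lambda>(k, b, c). x (k, b, p c)) r = om * uc n x r"
    proof
      fix r show "uc n (\<lambda>(k, b, c). x (k, b, p c)) r = om^2 * wc n x r \<and> wc n (\<lambda>(k, b, c). x (k, b, p c)) r = om * uc n x r"
        using id1(5)[of "X r 1" "X r 0" "X r 2"] id1(6)[of "X r 1" "X r 0" "X r 2"] asm by (simp add: U' W')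
    qed
    then show ?thesis using o2 o3 by blast
  next
    assume asm: "p 0 = 2" "p 1 = 1" "p 2 = 0"
    have "\<forall>r. uc n (\<lambda>(k, b, c). x (k, b, p c)) r = om * wc n x r \<and> wc n (\<lambda>(k, b, c). x (k, b, p c)) r = om^2 * uc n x r"
    proof
      fix r show "uc n (\<lambda>(k, b, c). x (k, b, p c)) r = om * wc n x r \<and> wc n (\<lambda>(k, b, c). x (k, b, p c)) r = om^2 * uc n x r"
        using id1(7)[of "X r 2" "X r 1" "X r 0"] id1(8)[of "X r 2" "X r 1" "X r 0"] asm by (simp add: U' W')
    qed
    then show ?thesis using o1 om3 by blast
  qed
qed

lemma S3_act_alt: "S3_act \<sigma> x = (\<lambda>(k, b, c). x (k, b, inv \<sigma> c))"
  by (simp add: S3_act_def)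

lemma piX_inv:
  assumes s: "\<sigma> \<in> S3"
  shows "piX n cc (S3_act \<sigma> x) = piX n cc x"
proof -
  have p: "inv \<sigma> permutes {0, 1, 2::nat}" using s permutes_inv by (auto simp: S3_def)
  obtain c1 c2 where c: "c1 * c2 = 1" "c1^3 = 1" and
    cs: "(\<forall>r. uc n (S3_act \<sigma> x) r = c1 * uc n x r \<and> wc n (S3_act \<sigma> x) r = c2 * wc n x r)
   \<or> (\<forall>r. uc n (S3_act \<sigma> x) r = c1 * wc n x r \<and> wc n (S3_act \<sigma> x) r = c2 * uc n x r)"
    using uw_act[OF p, of n x] unfolding S3_act_alt by blast
  have c': "c2 * c1 = 1" "c2^3 = 1" using c by (simp add: mult.commute, algebra)
  from cs show ?thesis
  proof
    assume h: "\<forall>r. uc n (S3_act \<sigma> x) r = c1 * uc n x r \<and> wc n (S3_act \<sigma> x) r = c2 * wc n x r"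
    then have "uc n (S3_act \<sigma> x) = (\<lambda>i. c1 * uc n x i)" "wc n (S3_act \<sigma> x) = (\<lambda>i. c2 * wc n x i)" by auto
    then show ?thesis unfolding piX_def using PiF_scale[OF c] by simp
  next
    assume h: "\<forall>r. uc n (S3_act \<sigma> x) r = c1 * wc n x r \<and> wc n (S3_act \<sigma> x) r = c2 * uc n x r"
    then have "uc n (S3_act \<sigma> x) = (\<lambda>i. c1 * wc n x i)" "wc n (S3_act \<sigma> x) = (\<lambda>i. c2 * uc n x i)" by auto
    then show ?thesis unfolding piX_def using PiF_scale[OF c'] PiF_swap by metis
  qed
qed


lemma root6: fixes z :: complex assumes "z \<noteq> 0" shows "\<exists>a. a^6 = z"
proof -
  have "(rcis (root 6 (cmod z)) (Arg z / 6))^6 = rcis ((root 6 (cmod z))^6) (real 6 * (Arg z / 6))"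
    by (rule DeMoivre2)
  also have "\<dots> = rcis (cmod z) (Arg z)" by simp
  also have "\<dots> = z" by (rule rcis_cmod_Arg)
  finally show ?thesis by blast
qed

lemma params:
  fixes A B :: complex assumes "A \<noteq> 0" "B \<noteq> 0"
  shows "\<exists>\<alpha> \<beta> cc. \<alpha> * \<beta> = 1 \<and> cc * \<alpha>^3 = A \<and> cc * \<beta>^3 = B \<and> cc \<noteq> 0"
proof -
  obtain a where a: "a^6 = A / B" using root6[of "A/B"] assms by auto
  have a0: "a \<noteq> 0" using a assms by auto
  have "(A / a^3) * (1/a)^3 = A / a^6" by (simp add: power_divide field_simps flip: power_add)
  also have "\<dots> = B" using a assms by simp
  finally have "(A / a^3) * (1/a)^3 = B" .
  moreover have "a * (1/a) = 1" "(A / a^3) * a^3 = A" "A / a^3 \<noteq> 0" using a0 assms by auto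
  ultimately show ?thesis by blast
qed

lemma orbit_sub_Pi:
  assumes n: "1 \<le> n" and ab: "\<alpha> * \<beta> = 1" "cc * \<alpha>^3 = A" "cc * \<beta>^3 = B"
    and z: "z \<in> sp_orbit n (M0 n) (T0 n A B)"
  shows "\<exists>U W. z = PiF n cc U W"
proof -
  obtain g h t where g: "g \<in> sp_group n" and gh: "\<forall>i<2*n. \<forall>j<2*n. (\<Sum>a<2*n. g i a * h a j) = (if i = j then 1 else 0)"
    and zz: "z = orb_el n A B g h t"
    using z unfolding sp_orbit_alt by blast
  show ?thesis using orb_el_Pi[OF n g gh ab] zz by blast
qed

lemma piX_xs: "piX n cc (xs n U W) = PiF n cc U W"
  unfolding piX_def by (rule PiF_local) (simp add: uc_xs wc_xs)

lemma inj_part: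
  assumes n: "1 \<le> n" and ab: "\<alpha> * \<beta> = 1" "cc * \<alpha>^3 = A" "cc * \<beta>^3 = B"
  shows "\<forall>p. poly_fun p \<and> (\<forall>x\<in>refl_space n. p (piX n cc x) = 0) \<longrightarrow>
           (\<forall>y\<in>zariski_closure (sp_orbit n (M0 n) (T0 n A B)). p y = 0)"
proof (intro allI impI ballI)
  fix p y assume p: "poly_fun p \<and> (\<forall>x\<in>refl_space n. p (piX n cc x) = 0)"
    and y: "y \<in> zariski_closure (sp_orbit n (M0 n) (T0 n A B))"
  have "\<forall>z\<in>sp_orbit n (M0 n) (T0 n A B). p z = 0"
  proof
    fix z assume "z \<in> sp_orbit n (M0 n) (T0 n A B)"
    then obtain U W where "z = PiF n cc U W" using orbit_sub_Pi[OF n ab] by blast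
    then have "z = piX n cc (xs n U W)" by (simp add: piX_xs)
    then show "p z = 0" using p xs_refl by auto
  qed
  then show "p y = 0" using y p unfolding zariski_closure_def by blast
qed

lemma generic_in:
  assumes n: "1 \<le> n" and ab: "\<alpha> * \<beta> = 1" "cc * \<alpha>^3 = A" "cc * \<beta>^3 = B"
    and U: "U \<in> Vs n" and W: "W \<in> Vs n" and nz: "omg n U W \<noteq> 0"
  shows "PiF n cc U W \<in> sp_orbit n (M0 n) (T0 n A B)"
proof -
  define t where "t = csqrt (omg n U W)"
  have t2: "t^2 = omg n U W" by (simp add: t_def)
  have t0: "t \<noteq> 0" using nz t2 by auto
  have a0: "\<alpha> \<noteq> 0" "\<beta> \<noteq> 0" using ab by auto
  define u' where "u' = (\<lambda>i. (1 / (\<alpha> * t)) * U i)"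
  define w' where "w' = (\<lambda>i. (1 / (\<beta> * t)) * W i)"
  have u'V: "u' \<in> Vs n" and w'V: "w' \<in> Vs n" using U W by (auto simp: u'_def w'_def Vs_def)
  have "omg n u' w' = (1 / (\<alpha> * t)) * ((1 / (\<beta> * t)) * omg n U W)"
    unfolding u'_def w'_def omg_left_scale omg_right_scale by simp
  also have "\<dots> = omg n U W / ((\<alpha> * \<beta>) * t^2)" by (simp add: power2_eq_square field_simps)
  also have "\<dots> = 1" using ab t2 nz by simp
  finally have om1: "omg n u' w' = 1" .
  obtain f where f: "sympm n f" "f (uvec 0) = u'" "f (uvec (2*n-1)) = w'"
    using transitive[OF n u'V w'V om1] by blast
  define g where "g = (\<lambda>i a. f (uvec a) i)"
  obtain h where g: "g \<in> sp_group n" and gh: "\<forall>i<2*n. \<forall>j<2*n. (\<Sum>a<2*n. g i a * h a j) = (if i = j then 1 else 0)"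
    using sympm_matrix[OF f(1)] unfolding g_def by blast
  have "orb_el n A B g h t = PiF n cc (\<lambda>i. \<alpha> * t * g i 0) (\<lambda>i. \<beta> * t * g i (2*n-1))"
    by (rule orb_el_Pi[OF n g gh ab])
  also have "(\<lambda>i. \<alpha> * t * g i 0) = U" using a0 t0 by (auto simp: g_def f u'_def)
  also have "(\<lambda>i. \<beta> * t * g i (2*n-1)) = W" using a0 t0 f(3) by (auto simp: g_def w'_def)
  finally have "PiF n cc U W = orb_el n A B g h t" by simp
  then show ?thesis unfolding sp_orbit_alt using g gh t0 by blast
qed

lemma vanish_limit:
  fixes F :: "complex \<Rightarrow> complex"
  assumes c: "isCont F 0" and d: "d > 0" and z: "\<forall>e. e \<noteq> 0 \<and> cmod e < d \<longrightarrow> F e = 0"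
  shows "F 0 = 0"
proof -
  have "F \<midarrow>0\<rightarrow> F 0" using c by (simp add: isCont_def)
  moreover have "eventually (\<lambda>e. F e = 0) (at 0)"
    unfolding eventually_at using d z by (auto simp: dist_norm)
  then have "F \<midarrow>0\<rightarrow> 0" by (rule tendsto_eventually)
  ultimately show ?thesis by (rule LIM_unique)
qed


lemma isCont_if_const: "isCont f x \<Longrightarrow> isCont g x \<Longrightarrow> isCont (\<lambda>e. if P then f e else g e) x"
  by (cases P) auto

lemma PiF_cont: "isCont (\<lambda>e. PiF n cc (\<lambda>i. U i + e * X i) (\<lambda>i. W i + e * Z i) j) e0"
proof (cases j)
  case (Inl a)
  then show ?thesis by (cases a) (auto simp: PiF_def pt_def PiM_def intro!: continuous_intros isCont_if_const)
next
  case (Inr a)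
  then show ?thesis by (cases a) (auto simp: PiF_def pt_def PiT_def intro!: continuous_intros isCont_if_const)
qed

lemma closure_part:
  assumes n: "1 \<le> n" and ab: "\<alpha> * \<beta> = 1" "cc * \<alpha>^3 = A" "cc * \<beta>^3 = B"
    and U: "U \<in> Vs n" and W: "W \<in> Vs n"
  shows "PiF n cc U W \<in> zariski_closure (sp_orbit n (M0 n) (T0 n A B))"
  unfolding zariski_closure_def
proof (intro CollectI allI impI, elim conjE)
  fix p assume p: "poly_fun p" and van: "\<forall>y\<in>sp_orbit n (M0 n) (T0 n A B). p y = 0"
  let ?e0 = "uvec 0" and ?eL = "uvec (2*n-1)"
  show "p (PiF n cc U W) = 0"
  proof (cases "omg n U W = 0")
    case False
    then show ?thesis using generic_in[OF n ab U W] van by blast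
  next
    case True
    define Aa where "Aa = omg n U ?eL + omg n ?e0 W"
    define F where "F = (\<lambda>e. p (PiF n cc (\<lambda>i. U i + e * ?e0 i) (\<lambda>i. W i + e * ?eL i)))"
    have om: "omg n (\<lambda>i. U i + e * ?e0 i) (\<lambda>i. W i + e * ?eL i) = e * (Aa + e)" for e
    proof -
      have "omg n ?e0 ?eL = 1" using omg_e0[OF n] n by (simp add: uvec_def)
      then show ?thesis unfolding omg_left_lin omg_right_lin Aa_def using True
        by (simp add: algebra_simps)
    qed
    define d where "d = (if Aa = 0 then 1 else cmod Aa)"
    have d: "d > 0" by (simp add: d_def)
    have Fz: "\<forall>e. e \<noteq> 0 \<and> cmod e < d \<longrightarrow> F e = 0"
    proof (intro allI impI, elim conjE)
      fix e :: complex assume e: "e \<noteq> 0" "cmod e < d"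
      have "Aa + e \<noteq> 0"
      proof
        assume "Aa + e = 0"
        then have "e = - Aa" by (simp add: eq_neg_iff_add_eq_0 add.commute)
        then show False using e by (auto simp: d_def split: if_splits)
      qed
      then have nz: "omg n (\<lambda>i. U i + e * ?e0 i) (\<lambda>i. W i + e * ?eL i) \<noteq> 0" using om e by simp
      have V1: "(\<lambda>i. U i + e * ?e0 i) \<in> Vs n" using U n by (intro Vs_add Vs_scale uvec_Vs) auto
      have V2: "(\<lambda>i. W i + e * ?eL i) \<in> Vs n" using W n by (intro Vs_add Vs_scale uvec_Vs) auto
      show "F e = 0" unfolding F_def using generic_in[OF n ab V1 V2 nz] van by blast
    qed
    have "isCont F 0" unfolding F_def by (rule pf_isCont[OF p]) (rule PiF_cont)
    then have "F 0 = 0" using vanish_limit d Fz by blast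
    then show ?thesis by (simp add: F_def)
  qed
qed


type_synonym bfun = "(nat \<Rightarrow> complex) \<Rightarrow> (nat \<Rightarrow> complex) \<Rightarrow> complex"

inductive R0 :: "nat \<Rightarrow> bfun \<Rightarrow> bool" for N where
  r0_const: "R0 N (\<lambda>u w. c)"
| r0_uw: "r < N \<Longrightarrow> s < N \<Longrightarrow> R0 N (\<lambda>u w. u r * w s)"
| r0_uuu: "r < N \<Longrightarrow> s < N \<Longrightarrow> t < N \<Longrightarrow> R0 N (\<lambda>u w. u r * u s * u t)"
| r0_www: "r < N \<Longrightarrow> s < N \<Longrightarrow> t < N \<Longrightarrow> R0 N (\<lambda>u w. w r * w s * w t)"
| r0_add: "R0 N f \<Longrightarrow> R0 N g \<Longrightarrow> R0 N (\<lambda>u w. f u w + g u w)"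
| r0_mult: "R0 N f \<Longrightarrow> R0 N g \<Longrightarrow> R0 N (\<lambda>u w. f u w * g u w)"

inductive R1 :: "nat \<Rightarrow> bfun \<Rightarrow> bool" for N where
  r1_zero: "R1 N (\<lambda>u w. 0)"
| r1_u: "r < N \<Longrightarrow> R0 N f \<Longrightarrow> R1 N (\<lambda>u w. u r * f u w)"
| r1_ww: "r < N \<Longrightarrow> s < N \<Longrightarrow> R0 N f \<Longrightarrow> R1 N (\<lambda>u w. w r * w s * f u w)"
| r1_add: "R1 N f \<Longrightarrow> R1 N g \<Longrightarrow> R1 N (\<lambda>u w. f u w + g u w)"

inductive R2 :: "nat \<Rightarrow> bfun \<Rightarrow> bool" for N where
  r2_zero: "R2 N (\<lambda>u w. 0)"
| r2_uu: "r < N \<Longrightarrow> s < N \<Longrightarrow> R0 N f \<Longrightarrow> R2 N (\<lambda>u w. u r * u s * f u w)"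
| r2_w: "r < N \<Longrightarrow> R0 N f \<Longrightarrow> R2 N (\<lambda>u w. w r * f u w)"
| r2_add: "R2 N f \<Longrightarrow> R2 N g \<Longrightarrow> R2 N (\<lambda>u w. f u w + g u w)"

lemma R0_cong: "R0 N F \<Longrightarrow> (\<And>u w. F u w = G u w) \<Longrightarrow> R0 N G"
proof -
  assume "R0 N F" "\<And>u w. F u w = G u w"
  moreover have "F = G" using \<open>\<And>u w. F u w = G u w\<close> by (intro ext) 
  ultimately show ?thesis by simp
qed
lemma R1_cong: "R1 N F \<Longrightarrow> (\<And>u w. F u w = G u w) \<Longrightarrow> R1 N G"
proof -
  assume "R1 N F" "\<And>u w. F u w = G u w"
  moreover have "F = G" using \<open>\<And>u w. F u w = G u w\<close> by (intro ext) 
  ultimately show ?thesis by simp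
qed
lemma R2_cong: "R2 N F \<Longrightarrow> (\<And>u w. F u w = G u w) \<Longrightarrow> R2 N G"
proof -
  assume "R2 N F" "\<And>u w. F u w = G u w"
  moreover have "F = G" using \<open>\<And>u w. F u w = G u w\<close> by (intro ext) 
  ultimately show ?thesis by simp
qed

lemma R0_R1: "R1 N g \<Longrightarrow> R0 N f \<Longrightarrow> R1 N (\<lambda>u w. f u w * g u w)"
proof (induction g rule: R1.induct)
  case r1_zero show ?case by (rule R1_cong[OF R1.r1_zero]) simp
next
  case (r1_u r g)
  have hh: "R1 N (\<lambda>u w. u r * (f u w * g u w))" by (intro R1.r1_u r0_mult r1_u)
  show ?case by (rule R1_cong[OF hh]) (simp add: algebra_simps)
next
  case (r1_ww r s g)
  have hh: "R1 N (\<lambda>u w. w r * w s * (f u w * g u w))" by (intro R1.r1_ww r0_mult r1_ww)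
  show ?case by (rule R1_cong[OF hh]) (simp add: algebra_simps)
next
  case (r1_add g1 g2)
  have hh: "R1 N (\<lambda>u w. f u w * g1 u w + f u w * g2 u w)" by (intro R1.r1_add r1_add)
  show ?case by (rule R1_cong[OF hh]) (simp add: algebra_simps)
qed

lemma R0_R2: "R2 N g \<Longrightarrow> R0 N f \<Longrightarrow> R2 N (\<lambda>u w. f u w * g u w)"
proof (induction g rule: R2.induct)
  case r2_zero show ?case by (rule R2_cong[OF R2.r2_zero]) simp
next
  case (r2_uu r s g)
  have hh: "R2 N (\<lambda>u w. u r * u s * (f u w * g u w))" by (intro R2.r2_uu r0_mult r2_uu)
  show ?case by (rule R2_cong[OF hh]) (simp add: algebra_simps)
next
  case (r2_w r g)
  have hh: "R2 N (\<lambda>u w. w r * (f u w * g u w))" by (intro R2.r2_w r0_mult r2_w)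
  show ?case by (rule R2_cong[OF hh]) (simp add: algebra_simps)
next
  case (r2_add g1 g2)
  have hh: "R2 N (\<lambda>u w. f u w * g1 u w + f u w * g2 u w)" by (intro R2.r2_add r2_add)
  show ?case by (rule R2_cong[OF hh]) (simp add: algebra_simps)
qed

lemma R1_R1: "R1 N f \<Longrightarrow> R1 N g \<Longrightarrow> R2 N (\<lambda>u w. f u w * g u w)"
proof (induction f arbitrary: g rule: R1.induct)
  case r1_zero show ?case by (rule R2_cong[OF R2.r2_zero]) simp
next
  case (r1_u r f)
  note rf = r1_u(1,2)
  from r1_u(3) show ?case
  proof (induction g rule: R1.induct)
    case r1_zero show ?case by (rule R2_cong[OF R2.r2_zero]) simp
  next
    case (r1_u s g)
    have hh: "R2 N (\<lambda>u w. u r * u s * (f u w * g u w))" by (intro R2.r2_uu r0_mult rf r1_u)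
    show ?case by (rule R2_cong[OF hh]) (simp add: algebra_simps)
  next
    case (r1_ww s t g)
    have hh: "R2 N (\<lambda>u w. w t * ((u r * w s) * (f u w * g u w)))" by (intro R2.r2_w r0_mult r0_uw rf r1_ww)
    show ?case by (rule R2_cong[OF hh]) (simp add: algebra_simps)
  next
    case (r1_add g1 g2)
    have hh: "R2 N (\<lambda>u w. (u r * f u w) * g1 u w + (u r * f u w) * g2 u w)" by (intro R2.r2_add r1_add)
    show ?case by (rule R2_cong[OF hh]) (simp add: algebra_simps)
  qed
next
  case (r1_ww r s f)
  note rf = r1_ww(1,2,3)
  from r1_ww(4) show ?case
  proof (induction g rule: R1.induct)
    case r1_zero show ?case by (rule R2_cong[OF R2.r2_zero]) simp
  next
    case (r1_u p g)
    have hh: "R2 N (\<lambda>u w. w s * ((u p * w r) * (f u w * g u w)))" by (intro R2.r2_w r0_mult r0_uw rf r1_u)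
    show ?case by (rule R2_cong[OF hh]) (simp add: algebra_simps)
  next
    case (r1_ww p q g)
    have hh: "R2 N (\<lambda>u w. w q * ((w r * w s * w p) * (f u w * g u w)))" by (intro R2.r2_w r0_mult r0_www rf r1_ww)
    show ?case by (rule R2_cong[OF hh]) (simp add: algebra_simps)
  next
    case (r1_add g1 g2)
    have hh: "R2 N (\<lambda>u w. (w r * w s * f u w) * g1 u w + (w r * w s * f u w) * g2 u w)" by (intro R2.r2_add r1_add)
    show ?case by (rule R2_cong[OF hh]) (simp add: algebra_simps)
  qed
next
  case (r1_add f1 f2)
  have hh: "R2 N (\<lambda>u w. f1 u w * g u w + f2 u w * g u w)" by (intro R2.r2_add r1_add)
  show ?case by (rule R2_cong[OF hh]) (simp add: algebra_simps)
qed


lemma R1_R2: "R1 N f \<Longrightarrow> R2 N g \<Longrightarrow> R0 N (\<lambda>u w. f u w * g u w)"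
proof (induction f arbitrary: g rule: R1.induct)
  case r1_zero show ?case by (rule R0_cong[OF r0_const[of N 0]]) simp
next
  case (r1_u r f)
  note rf = r1_u(1,2)
  from r1_u(3) show ?case
  proof (induction g rule: R2.induct)
    case r2_zero show ?case by (rule R0_cong[OF r0_const[of N 0]]) simp
  next
    case (r2_uu s t g)
    have hh: "R0 N (\<lambda>u w. (u r * u s * u t) * (f u w * g u w))" by (intro r0_mult r0_uuu rf r2_uu)
    show ?case by (rule R0_cong[OF hh]) (simp add: algebra_simps)
  next
    case (r2_w s g)
    have hh: "R0 N (\<lambda>u w. (u r * w s) * (f u w * g u w))" by (intro r0_mult r0_uw rf r2_w)
    show ?case by (rule R0_cong[OF hh]) (simp add: algebra_simps)
  next
    case (r2_add g1 g2)
    have hh: "R0 N (\<lambda>u w. (u r * f u w) * g1 u w + (u r * f u w) * g2 u w)" by (intro r0_add r2_add)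
    show ?case by (rule R0_cong[OF hh]) (simp add: algebra_simps)
  qed
next
  case (r1_ww r s f)
  note rf = r1_ww(1,2,3)
  from r1_ww(4) show ?case
  proof (induction g rule: R2.induct)
    case r2_zero show ?case by (rule R0_cong[OF r0_const[of N 0]]) simp
  next
    case (r2_uu p q g)
    have hh: "R0 N (\<lambda>u w. (u p * w r) * (u q * w s) * (f u w * g u w))" by (intro r0_mult r0_uw rf r2_uu)
    show ?case by (rule R0_cong[OF hh]) (simp add: algebra_simps)
  next
    case (r2_w p g)
    have hh: "R0 N (\<lambda>u w. (w r * w s * w p) * (f u w * g u w))" by (intro r0_mult r0_www rf r2_w)
    show ?case by (rule R0_cong[OF hh]) (simp add: algebra_simps)
  next
    case (r2_add g1 g2)
    have hh: "R0 N (\<lambda>u w. (w r * w s * f u w) * g1 u w + (w r * w s * f u w) * g2 u w)" by (intro r0_add r2_add)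
    show ?case by (rule R0_cong[OF hh]) (simp add: algebra_simps)
  qed
next
  case (r1_add f1 f2)
  have hh: "R0 N (\<lambda>u w. f1 u w * g u w + f2 u w * g u w)" by (intro r0_add r1_add)
  show ?case by (rule R0_cong[OF hh]) (simp add: algebra_simps)
qed

lemma R2_R2: "R2 N f \<Longrightarrow> R2 N g \<Longrightarrow> R1 N (\<lambda>u w. f u w * g u w)"
proof (induction f arbitrary: g rule: R2.induct)
  case r2_zero show ?case by (rule R1_cong[OF R1.r1_zero]) simp
next
  case (r2_uu r s f)
  note rf = r2_uu(1,2,3)
  from r2_uu(4) show ?case
  proof (induction g rule: R2.induct)
    case r2_zero show ?case by (rule R1_cong[OF R1.r1_zero]) simp
  next
    case (r2_uu p q g)
    have hh: "R1 N (\<lambda>u w. u q * ((u r * u s * u p) * (f u w * g u w)))" by (intro R1.r1_u r0_mult r0_uuu rf r2_uu)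
    show ?case by (rule R1_cong[OF hh]) (simp add: algebra_simps)
  next
    case (r2_w p g)
    have hh: "R1 N (\<lambda>u w. u s * ((u r * w p) * (f u w * g u w)))" by (intro R1.r1_u r0_mult r0_uw rf r2_w)
    show ?case by (rule R1_cong[OF hh]) (simp add: algebra_simps)
  next
    case (r2_add g1 g2)
    have hh: "R1 N (\<lambda>u w. (u r * u s * f u w) * g1 u w + (u r * u s * f u w) * g2 u w)" by (intro R1.r1_add r2_add)
    show ?case by (rule R1_cong[OF hh]) (simp add: algebra_simps)
  qed
next
  case (r2_w r f)
  note rf = r2_w(1,2)
  from r2_w(3) show ?case
  proof (induction g rule: R2.induct)
    case r2_zero show ?case by (rule R1_cong[OF R1.r1_zero]) simp
  next
    case (r2_uu p q g)
    have hh: "R1 N (\<lambda>u w. u q * ((u p * w r) * (f u w * g u w)))" by (intro R1.r1_u r0_mult r0_uw rf r2_uu)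
    show ?case by (rule R1_cong[OF hh]) (simp add: algebra_simps)
  next
    case (r2_w p g)
    have hh: "R1 N (\<lambda>u w. w r * w p * (f u w * g u w))" by (intro R1.r1_ww r0_mult rf r2_w)
    show ?case by (rule R1_cong[OF hh]) (simp add: algebra_simps)
  next
    case (r2_add g1 g2)
    have hh: "R1 N (\<lambda>u w. (w r * f u w) * g1 u w + (w r * f u w) * g2 u w)" by (intro R1.r1_add r2_add)
    show ?case by (rule R1_cong[OF hh]) (simp add: algebra_simps)
  qed
next
  case (r2_add f1 f2)
  have hh: "R1 N (\<lambda>u w. f1 u w * g u w + f2 u w * g u w)" by (intro R1.r1_add r2_add)
  show ?case by (rule R1_cong[OF hh]) (simp add: algebra_simps)
qed

lemma comm_cong: fixes f g :: bfun assumes "P (\<lambda>u w. f u w * g u w)" shows "P (\<lambda>u w. g u w * f u w)"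
proof -
  have "(\<lambda>u w. g u w * f u w) = (\<lambda>u w. f u w * g u w)" by (intro ext) (simp add: mult.commute)
  then show ?thesis using assms by simp
qed

definition rho :: "(nat \<Rightarrow> complex) \<Rightarrow> nat \<Rightarrow> complex" where "rho u = (\<lambda>i. om * u i)"
definition rho2 :: "(nat \<Rightarrow> complex) \<Rightarrow> nat \<Rightarrow> complex" where "rho2 w = (\<lambda>i. om^2 * w i)"

lemma rho_app: "rho u r = om * u r" by (simp add: rho_def)
lemma rho2_app: "rho2 w r = om^2 * w r" by (simp add: rho2_def)

lemma om_rels: "om * om^2 = 1" "om^2 * om = 1" "om * om * om = 1" "om^2 * om^2 * om^2 = 1" "om^2 * om^2 = om"
  using om3 by algebra+

lemma R0_wt: "R0 N f \<Longrightarrow> f (rho u) (rho2 w) = f u w"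
proof (induction rule: R0.induct)
  case (r0_uw r s)
  have "om * u r * (om^2 * w s) = (om * om^2) * (u r * w s)" by (simp add: algebra_simps)
  then show ?case by (simp add: rho_def rho2_def om_rels)
next
  case (r0_uuu r s t)
  have "om * u r * (om * u s) * (om * u t) = (om * om * om) * (u r * u s * u t)" by (simp add: algebra_simps)
  then show ?case by (simp add: rho_def rho2_def om_rels)
next
  case (r0_www r s t)
  have "om^2 * w r * (om^2 * w s) * (om^2 * w t) = (om^2 * om^2 * om^2) * (w r * w s * w t)" by (simp add: algebra_simps)
  then show ?case by (simp only: rho_def rho2_def om_rels) simp
qed auto

lemma R1_wt: "R1 N f \<Longrightarrow> f (rho u) (rho2 w) = om * f u w"
proof (induction rule: R1.induct)
  case (r1_u r f)
  have a: "f (rho u) (rho2 w) = f u w" by (rule R0_wt[OF r1_u(2)])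
  have b: "rho u r = om * u r" by (simp add: rho_def)
  show ?case by (simp only: a b) (simp add: algebra_simps)
next
  case (r1_ww r s f)
  have "om^2 * w r * (om^2 * w s) * f u w = (om^2 * om^2) * (w r * w s * f u w)" by (simp add: algebra_simps)
  moreover have a: "f (rho u) (rho2 w) = f u w" by (rule R0_wt[OF r1_ww(3)])
  moreover have b: "rho2 w r = om^2 * w r" "rho2 w s = om^2 * w s" by (simp_all add: rho2_def)
  ultimately show ?case by (simp only: a b om_rels)
qed (auto simp: algebra_simps)

lemma R2_wt: "R2 N f \<Longrightarrow> f (rho u) (rho2 w) = om^2 * f u w"
proof (induction rule: R2.induct)
  case (r2_uu r s f)
  have "om * u r * (om * u s) * f u w = (om * om) * (u r * u s * f u w)" by (simp add: algebra_simps)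
  moreover have a: "f (rho u) (rho2 w) = f u w" by (rule R0_wt[OF r2_uu(3)])
  moreover have b: "rho u r = om * u r" "rho u s = om * u s" by (simp_all add: rho_def)
  ultimately show ?case by (simp only: a b) (simp add: power2_eq_square)
next
  case (r2_w r f)
  have a: "f (rho u) (rho2 w) = f u w" by (rule R0_wt[OF r2_w(2)])
  have b: "rho2 w r = om^2 * w r" by (simp add: rho2_def)
  show ?case by (simp only: a b) (simp add: algebra_simps)
qed (auto simp: algebra_simps)


lemma decomp:
  fixes q :: "(nat \<times> bool \<times> nat \<Rightarrow> complex) \<Rightarrow> complex"
  assumes "poly_fun q"
  shows "\<exists>f0 f1 f2. R0 (2*n) f0 \<and> R1 (2*n) f1 \<and> R2 (2*n) f2 \<and> (\<forall>u w. q (xs n u w) = f0 u w + f1 u w + f2 u w)"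
  using assms
proof (induction rule: poly_fun.induct)
  case (pf_const c)
  have "R0 (2*n) (\<lambda>u w. c)" by (rule r0_const)
  then show ?case using R1.r1_zero R2.r2_zero by fastforce
next
  case (pf_var i)
  obtain k b c where i: "i = (k, b, c)" by (cases i) auto
  show ?case
  proof (cases "k < n \<and> c < 3")
    case True
    then have r: "ri n k b < 2*n" using ri_lt by auto
    have a: "R0 (2*n) (\<lambda>u w. 0)" by (rule r0_const)
    have b: "R1 (2*n) (\<lambda>u w. u (ri n k b) * om^c)" by (rule R1.r1_u[OF r r0_const])
    have d: "R2 (2*n) (\<lambda>u w. w (ri n k b) * om^(2*c))" by (rule R2.r2_w[OF r r0_const])
    have "\<forall>u w. xs n u w i = 0 + u (ri n k b) * om^c + w (ri n k b) * om^(2*c)"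
      using True by (simp add: xs_def i mult.commute)
    then show ?thesis using a b d by blast
  next
    case False
    have "\<forall>u w. xs n u w i = 0 + 0 + 0" using False by (auto simp: xs_def i)
    then show ?thesis using r0_const R1.r1_zero R2.r2_zero by blast
  qed
next
  case (pf_add p q)
  then obtain a0 a1 a2 b0 b1 b2 where
    a: "R0 (2*n) a0" "R1 (2*n) a1" "R2 (2*n) a2" "\<forall>u w. p (xs n u w) = a0 u w + a1 u w + a2 u w" and
    b: "R0 (2*n) b0" "R1 (2*n) b1" "R2 (2*n) b2" "\<forall>u w. q (xs n u w) = b0 u w + b1 u w + b2 u w"
    by blast
  have "R0 (2*n) (\<lambda>u w. a0 u w + b0 u w)" "R1 (2*n) (\<lambda>u w. a1 u w + b1 u w)" "R2 (2*n) (\<lambda>u w. a2 u w + b2 u w)"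
    using a b by (auto intro: r0_add R1.r1_add R2.r2_add)
  moreover have "\<forall>u w. p (xs n u w) + q (xs n u w) = (a0 u w + b0 u w) + (a1 u w + b1 u w) + (a2 u w + b2 u w)"
    using a(4) b(4) by (simp add: algebra_simps)
  ultimately show ?case by blast
next
  case (pf_mult p q)
  then obtain a0 a1 a2 b0 b1 b2 where
    a: "R0 (2*n) a0" "R1 (2*n) a1" "R2 (2*n) a2" "\<forall>u w. p (xs n u w) = a0 u w + a1 u w + a2 u w" and
    b: "R0 (2*n) b0" "R1 (2*n) b1" "R2 (2*n) b2" "\<forall>u w. q (xs n u w) = b0 u w + b1 u w + b2 u w"
    by blast
  have c0: "R0 (2*n) (\<lambda>u w. a0 u w * b0 u w + a1 u w * b2 u w + a2 u w * b1 u w)"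
    by (intro r0_add r0_mult a b R1_R2 comm_cong[where P="R0 (2*n)", OF R1_R2[OF b(2) a(3)]])
  have c1: "R1 (2*n) (\<lambda>u w. a0 u w * b1 u w + a1 u w * b0 u w + a2 u w * b2 u w)"
    by (intro R1.r1_add R0_R1[OF b(2) a(1)] comm_cong[where P="R1 (2*n)", OF R0_R1[OF a(2) b(1)]] R2_R2[OF a(3) b(3)])
  have c2: "R2 (2*n) (\<lambda>u w. a0 u w * b2 u w + a2 u w * b0 u w + a1 u w * b1 u w)"
    by (intro R2.r2_add R0_R2[OF b(3) a(1)] comm_cong[where P="R2 (2*n)", OF R0_R2[OF a(3) b(1)]] R1_R1[OF a(2) b(2)])
  have "\<forall>u w. p (xs n u w) * q (xs n u w) = (a0 u w * b0 u w + a1 u w * b2 u w + a2 u w * b1 u w)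
     + (a0 u w * b1 u w + a1 u w * b0 u w + a2 u w * b2 u w) + (a0 u w * b2 u w + a2 u w * b0 u w + a1 u w * b1 u w)"
    using a(4) b(4) by (simp add: algebra_simps)
  then show ?case using c0 c1 c2 by blast
qed

lemma avg:
  assumes f: "R0 N f0" "R1 N f1" "R2 N f2" and Q: "\<forall>u w. Q u w = f0 u w + f1 u w + f2 u w"
    and inv: "\<forall>u w. Q (rho u) (rho2 w) = Q u w"
  shows "Q u w = f0 u w"
proof -
  have e1: "Q u w = f0 u w + om * f1 u w + om^2 * f2 u w"
    using inv Q R0_wt[OF f(1)] R1_wt[OF f(2)] R2_wt[OF f(3)] by metis
  have e2: "Q u w = f0 u w + om * (om * f1 u w) + om^2 * (om^2 * f2 u w)"
  proof -
    have "Q u w = Q (rho (rho u)) (rho2 (rho2 w))" using inv by metis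
    also have "\<dots> = f0 (rho (rho u)) (rho2 (rho2 w)) + f1 (rho (rho u)) (rho2 (rho2 w)) + f2 (rho (rho u)) (rho2 (rho2 w))"
      using Q by blast
    also have "\<dots> = f0 u w + om * (om * f1 u w) + om^2 * (om^2 * f2 u w)"
      using R0_wt[OF f(1)] R1_wt[OF f(2)] R2_wt[OF f(3)] by simp
    finally show ?thesis .
  qed
  have e0: "Q u w = f0 u w + f1 u w + f2 u w" using Q by blast
  define a where "a = f1 u w"
  define b where "b = f2 u w"
  define QQ where "QQ = Q u w"
  define F where "F = f0 u w"
  have "QQ = F" using e0 e1 e2 om_sum om3 unfolding a_def[symmetric] b_def[symmetric] QQ_def[symmetric] F_def[symmetric]
    by algebra
  then show ?thesis by (simp add: QQ_def F_def)
qed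


definition Qf :: "nat \<Rightarrow> nat \<Rightarrow> bfun" where "Qf r s = (\<lambda>u w. u r * w s + w r * u s)"
definition Cf :: "nat \<Rightarrow> nat \<Rightarrow> nat \<Rightarrow> bfun" where "Cf r s t = (\<lambda>u w. u r * u s * u t + w r * w s * w t)"
definition Df :: "nat \<Rightarrow> nat \<Rightarrow> bfun" where "Df r s = (\<lambda>u w. u r * w s - w r * u s)"
definition Ef :: "nat \<Rightarrow> nat \<Rightarrow> nat \<Rightarrow> bfun" where "Ef r s t = (\<lambda>u w. u r * u s * u t - w r * w s * w t)"

lemma DD_id: "Df r s u w * Df p q u w = Qf r q u w * Qf s p u w - Qf r p u w * Qf s q u w"
  by (simp add: Df_def Qf_def algebra_simps)

lemma DE_id: "Df r s u w * Ef p q t u w = Qf s p u w * Cf r q t u w - Qf r p u w * Cf s q t u w"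
  by (simp add: Df_def Qf_def Ef_def Cf_def algebra_simps)

lemma EE_id: "Ef a1 a2 a3 u w * Ef b1 b2 b3 u w = Cf a1 a2 a3 u w * Cf b1 b2 b3 u w
   - (1/2) * (Qf a1 b1 u w * Qf a2 b2 u w * Qf a3 b3 u w
       + Qf a1 b1 u w * (Df a2 b2 u w * Df a3 b3 u w)
       + Qf a2 b2 u w * (Df a1 b1 u w * Df a3 b3 u w)
       + Qf a3 b3 u w * (Df a1 b1 u w * Df a2 b2 u w))"
  by (simp add: Df_def Qf_def Ef_def Cf_def algebra_simps)


inductive Ev :: "nat \<Rightarrow> bfun \<Rightarrow> bool" for N where
  ev_const: "Ev N (\<lambda>u w. c)"
| ev_Q: "r < N \<Longrightarrow> s < N \<Longrightarrow> Ev N (Qf r s)"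
| ev_C: "r < N \<Longrightarrow> s < N \<Longrightarrow> t < N \<Longrightarrow> Ev N (Cf r s t)"
| ev_add: "Ev N f \<Longrightarrow> Ev N g \<Longrightarrow> Ev N (\<lambda>u w. f u w + g u w)"
| ev_mult: "Ev N f \<Longrightarrow> Ev N g \<Longrightarrow> Ev N (\<lambda>u w. f u w * g u w)"

inductive Od :: "nat \<Rightarrow> bfun \<Rightarrow> bool" for N where
  od_zero: "Od N (\<lambda>u w. 0)"
| od_D: "r < N \<Longrightarrow> s < N \<Longrightarrow> Ev N f \<Longrightarrow> Od N (\<lambda>u w. Df r s u w * f u w)"
| od_E: "r < N \<Longrightarrow> s < N \<Longrightarrow> t < N \<Longrightarrow> Ev N f \<Longrightarrow> Od N (\<lambda>u w. Ef r s t u w * f u w)"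
| od_add: "Od N f \<Longrightarrow> Od N g \<Longrightarrow> Od N (\<lambda>u w. f u w + g u w)"

lemma Ev_cong: "Ev N F \<Longrightarrow> (\<And>u w. F u w = G u w) \<Longrightarrow> Ev N G"
proof -
  assume "Ev N F" "\<And>u w. F u w = G u w"
  moreover have "F = G" using \<open>\<And>u w. F u w = G u w\<close> by (intro ext)
  ultimately show ?thesis by simp
qed

lemma Od_cong: "Od N F \<Longrightarrow> (\<And>u w. F u w = G u w) \<Longrightarrow> Od N G"
proof -
  assume "Od N F" "\<And>u w. F u w = G u w"
  moreover have "F = G" using \<open>\<And>u w. F u w = G u w\<close> by (intro ext)
  ultimately show ?thesis by simp
qed

lemma ev_sub: "Ev N f \<Longrightarrow> Ev N g \<Longrightarrow> Ev N (\<lambda>u w. f u w - g u w)"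
proof -
  assume f: "Ev N f" and g: "Ev N g"
  have "Ev N (\<lambda>u w. f u w + (-1) * g u w)" by (intro ev_add ev_mult ev_const f g)
  then show ?thesis by (rule Ev_cong) simp
qed

lemma ev_Q': "r < N \<Longrightarrow> s < N \<Longrightarrow> Ev N (\<lambda>u w. Qf r s u w)"
  using ev_Q[of r N s] by (simp add: eta_contract_eq)

lemma ev_C': "r < N \<Longrightarrow> s < N \<Longrightarrow> t < N \<Longrightarrow> Ev N (\<lambda>u w. Cf r s t u w)"
  using ev_C[of r N s t] by simp

lemma ev_DD: "r < N \<Longrightarrow> s < N \<Longrightarrow> p < N \<Longrightarrow> q < N \<Longrightarrow> Ev N (\<lambda>u w. Df r s u w * Df p q u w)"
  unfolding DD_id by (intro ev_sub ev_mult ev_Q')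

lemma ev_DE: "r < N \<Longrightarrow> s < N \<Longrightarrow> p < N \<Longrightarrow> q < N \<Longrightarrow> t < N \<Longrightarrow> Ev N (\<lambda>u w. Df r s u w * Ef p q t u w)"
  unfolding DE_id by (intro ev_sub ev_mult ev_Q' ev_C')

lemma ev_ED: "r < N \<Longrightarrow> s < N \<Longrightarrow> p < N \<Longrightarrow> q < N \<Longrightarrow> t < N \<Longrightarrow> Ev N (\<lambda>u w. Ef p q t u w * Df r s u w)"
  using ev_DE[of r N s p q t] by (simp add: mult.commute)

lemma ev_EE: "a1 < N \<Longrightarrow> a2 < N \<Longrightarrow> a3 < N \<Longrightarrow> b1 < N \<Longrightarrow> b2 < N \<Longrightarrow> b3 < N \<Longrightarrow>
   Ev N (\<lambda>u w. Ef a1 a2 a3 u w * Ef b1 b2 b3 u w)"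
  unfolding EE_id by (intro ev_sub ev_mult ev_add ev_const ev_Q' ev_C' ev_DD)

lemma Od_Ev: "Od N g \<Longrightarrow> Ev N f \<Longrightarrow> Od N (\<lambda>u w. g u w * f u w)"
proof (induction g rule: Od.induct)
  case od_zero show ?case by (rule Od_cong[OF Od.od_zero]) simp
next
  case (od_D r s h)
  have hh: "Od N (\<lambda>u w. Df r s u w * (h u w * f u w))" by (intro Od.od_D ev_mult od_D)
  show ?case by (rule Od_cong[OF hh]) (simp add: algebra_simps)
next
  case (od_E r s t h)
  have hh: "Od N (\<lambda>u w. Ef r s t u w * (h u w * f u w))" by (intro Od.od_E ev_mult od_E)
  show ?case by (rule Od_cong[OF hh]) (simp add: algebra_simps)
next
  case (od_add g1 g2)
  have hh: "Od N (\<lambda>u w. g1 u w * f u w + g2 u w * f u w)" by (intro Od.od_add od_add)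
  show ?case by (rule Od_cong[OF hh]) (simp add: algebra_simps)
qed

lemma Od_Od: "Od N f \<Longrightarrow> Od N g \<Longrightarrow> Ev N (\<lambda>u w. f u w * g u w)"
proof (induction f arbitrary: g rule: Od.induct)
  case od_zero show ?case by (rule Ev_cong[OF ev_const[of N 0]]) simp
next
  case (od_D r s h)
  note rh = od_D(1,2,3)
  from od_D(4) show ?case
  proof (induction g rule: Od.induct)
    case od_zero show ?case by (rule Ev_cong[OF ev_const[of N 0]]) simp
  next
    case (od_D p q k)
    have hh: "Ev N (\<lambda>u w. (Df r s u w * Df p q u w) * (h u w * k u w))" by (intro ev_mult ev_DD rh od_D)
    show ?case by (rule Ev_cong[OF hh]) (simp add: algebra_simps)
  next
    case (od_E p q t k)
    have hh: "Ev N (\<lambda>u w. (Df r s u w * Ef p q t u w) * (h u w * k u w))" by (intro ev_mult ev_DE rh od_E)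
    show ?case by (rule Ev_cong[OF hh]) (simp add: algebra_simps)
  next
    case (od_add g1 g2)
    have hh: "Ev N (\<lambda>u w. (Df r s u w * h u w) * g1 u w + (Df r s u w * h u w) * g2 u w)" by (intro ev_add od_add)
    show ?case by (rule Ev_cong[OF hh]) (simp add: algebra_simps)
  qed
next
  case (od_E r s t h)
  note rh = od_E(1,2,3,4)
  from od_E(5) show ?case
  proof (induction g rule: Od.induct)
    case od_zero show ?case by (rule Ev_cong[OF ev_const[of N 0]]) simp
  next
    case (od_D p q k)
    have hh: "Ev N (\<lambda>u w. (Ef r s t u w * Df p q u w) * (h u w * k u w))" by (intro ev_mult ev_ED rh od_D)
    show ?case by (rule Ev_cong[OF hh]) (simp add: algebra_simps)
  next
    case (od_E p q t' k)
    have hh: "Ev N (\<lambda>u w. (Ef r s t u w * Ef p q t' u w) * (h u w * k u w))" by (intro ev_mult ev_EE rh od_E)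
    show ?case by (rule Ev_cong[OF hh]) (simp add: algebra_simps)
  next
    case (od_add g1 g2)
    have hh: "Ev N (\<lambda>u w. (Ef r s t u w * h u w) * g1 u w + (Ef r s t u w * h u w) * g2 u w)" by (intro ev_add od_add)
    show ?case by (rule Ev_cong[OF hh]) (simp add: algebra_simps)
  qed
next
  case (od_add f1 f2)
  have hh: "Ev N (\<lambda>u w. f1 u w * g u w + f2 u w * g u w)" by (intro ev_add od_add)
  show ?case by (rule Ev_cong[OF hh]) (simp add: algebra_simps)
qed

lemma R0_split: "R0 N f \<Longrightarrow> \<exists>e od. Ev N e \<and> Od N od \<and> (\<forall>u w. f u w = e u w + od u w)"
proof (induction rule: R0.induct)
  case (r0_const c)
  then show ?case using ev_const od_zero by fastforce
next
  case (r0_uw r s)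
  have "Ev N (\<lambda>u w. (1/2) * Qf r s u w)" by (intro ev_mult ev_const ev_Q' r0_uw)
  moreover have "Od N (\<lambda>u w. Df r s u w * (1/2))" by (intro od_D ev_const r0_uw)
  moreover have "\<forall>u w. u r * w s = (1/2) * Qf r s u w + Df r s u w * (1/2)"
    by (simp add: Qf_def Df_def algebra_simps)
  ultimately show ?case by blast
next
  case (r0_uuu r s t)
  have "Ev N (\<lambda>u w. (1/2) * Cf r s t u w)" by (intro ev_mult ev_const ev_C' r0_uuu)
  moreover have "Od N (\<lambda>u w. Ef r s t u w * (1/2))" by (intro od_E ev_const r0_uuu)
  moreover have "\<forall>u w. u r * u s * u t = (1/2) * Cf r s t u w + Ef r s t u w * (1/2)"
    by (simp add: Cf_def Ef_def algebra_simps)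
  ultimately show ?case by blast
next
  case (r0_www r s t)
  have "Ev N (\<lambda>u w. (1/2) * Cf r s t u w)" by (intro ev_mult ev_const ev_C' r0_www)
  moreover have "Od N (\<lambda>u w. Ef r s t u w * (-1/2))" by (intro od_E ev_const r0_www)
  moreover have "\<forall>u w. w r * w s * w t = (1/2) * Cf r s t u w + Ef r s t u w * (-1/2)"
    by (simp add: Cf_def Ef_def algebra_simps)
  ultimately show ?case by blast
next
  case (r0_add f g)
  then obtain e1 o1 e2 o2 where a: "Ev N e1" "Od N o1" "\<forall>u w. f u w = e1 u w + o1 u w"
    and b: "Ev N e2" "Od N o2" "\<forall>u w. g u w = e2 u w + o2 u w" by blast
  have "Ev N (\<lambda>u w. e1 u w + e2 u w)" "Od N (\<lambda>u w. o1 u w + o2 u w)" using a b by (auto intro: ev_add od_add)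
  moreover have "\<forall>u w. f u w + g u w = (e1 u w + e2 u w) + (o1 u w + o2 u w)" using a b by simp
  ultimately show ?case by blast
next
  case (r0_mult f g)
  then obtain e1 o1 e2 o2 where a: "Ev N e1" "Od N o1" "\<forall>u w. f u w = e1 u w + o1 u w"
    and b: "Ev N e2" "Od N o2" "\<forall>u w. g u w = e2 u w + o2 u w" by blast
  have "Ev N (\<lambda>u w. e1 u w * e2 u w + o1 u w * o2 u w)" using a b by (auto intro: ev_add ev_mult Od_Od)
  moreover have "Od N (\<lambda>u w. o2 u w * e1 u w + o1 u w * e2 u w)" using a b by (auto intro: od_add Od_Ev)
  moreover have "\<forall>u w. f u w * g u w = (e1 u w * e2 u w + o1 u w * o2 u w) + (o2 u w * e1 u w + o1 u w * e2 u w)"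
    using a b by (simp add: algebra_simps)
  ultimately show ?case by blast
qed

lemma Ev_swap: "Ev N f \<Longrightarrow> f w u = f u w"
  by (induction rule: Ev.induct) (auto simp: Qf_def Cf_def algebra_simps)

lemma Od_swap: "Od N f \<Longrightarrow> f w u = - f u w"
  by (induction rule: Od.induct) (auto simp: Df_def Ef_def Ev_swap algebra_simps)

lemma Ev_poly:
  assumes "Ev (2*n) f" and cc: "cc \<noteq> 0"
  shows "\<exists>p. poly_fun p \<and> (\<forall>u w. f u w = p (PiF n cc u w))"
  using assms(1)
proof (induction rule: Ev.induct)
  case (ev_const c)
  then show ?case using pf_const by fastforce
next
  case (ev_Q r s)
  define s' where "s' = 2*n-1-s"
  have s': "s' < 2*n" "2*n-1-s' = s" using ev_Q by (auto simp: s'_def)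
  have "poly_fun (\<lambda>y. sg n s' * y (Inl (r, s')))" by (intro pf_mult pf_const pf_var)
  moreover have "Qf r s u w = sg n s' * PiF n cc u w (Inl (r, s'))" for u w
    using s' ev_Q sg_sq[of n s'] by (simp add: PiF_def pt_def PiM_def Qf_def mult.assoc[symmetric])
  ultimately show ?case by blast
next
  case (ev_C r s t)
  have "poly_fun (\<lambda>y. (1/cc) * y (Inr (r, s, t)))" by (intro pf_mult pf_const pf_var)
  moreover have "Cf r s t u w = (1/cc) * PiF n cc u w (Inr (r, s, t))" for u w
    using ev_C cc by (simp add: PiF_def pt_def PiT_def Cf_def)
  ultimately show ?case by blast
next
  case (ev_add f g)
  then obtain p q where "poly_fun p" "\<forall>u w. f u w = p (PiF n cc u w)" "poly_fun q" "\<forall>u w. g u w = q (PiF n cc u w)" by blast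
  then show ?case by (intro exI[of _ "\<lambda>y. p y + q y"]) (auto intro: pf_add)
next
  case (ev_mult f g)
  then obtain p q where "poly_fun p" "\<forall>u w. f u w = p (PiF n cc u w)" "poly_fun q" "\<forall>u w. g u w = q (PiF n cc u w)" by blast
  then show ?case by (intro exI[of _ "\<lambda>y. p y * q y"]) (auto intro: pf_mult)
qed


definition sc :: "nat \<Rightarrow> nat" where "sc = (\<lambda>c. if c = 0 then 2 else if c = 1 then 0 else if c = 2 then 1 else c)"
definition tc :: "nat \<Rightarrow> nat" where "tc = (\<lambda>c. if c = 0 then 1 else if c = 1 then 2 else if c = 2 then 0 else c)"
definition ss :: "nat \<Rightarrow> nat" where "ss = (\<lambda>c. if c = 1 then 2 else if c = 2 then 1 else c)"

lemma inv_sc: "inv sc = tc"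
  by (rule inv_equality) (auto simp: sc_def tc_def)

lemma inv_ss: "inv ss = ss"
  by (rule inv_equality) (auto simp: ss_def)

lemma sc_S3: "sc \<in> S3"
proof -
  have "\<forall>x. x \<notin> {0, 1, 2} \<longrightarrow> sc x = x" by (auto simp: sc_def)
  moreover have "\<forall>y. \<exists>!x. sc x = y"
  proof
    fix y
    show "\<exists>!x. sc x = y"
    proof
      show "sc (tc y) = y" by (auto simp: sc_def tc_def)
    next
      fix x assume "sc x = y"
      then show "x = tc y" by (auto simp: sc_def tc_def split: if_splits)
    qed
  qed
  ultimately show ?thesis by (simp add: S3_def permutes_def)
qed

lemma ss_S3: "ss \<in> S3"
proof -
  have "\<forall>x. x \<notin> {0, 1, 2} \<longrightarrow> ss x = x" by (auto simp: ss_def)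
  moreover have "\<forall>y. \<exists>!x. ss x = y"
  proof
    fix y
    show "\<exists>!x. ss x = y"
    proof
      show "ss (ss y) = y" by (auto simp: ss_def)
    next
      fix x assume "ss x = y"
      then show "x = ss y" by (auto simp: ss_def split: if_splits)
    qed
  qed
  ultimately show ?thesis by (simp add: S3_def permutes_def)
qed

lemma om_mul1: "om * (om * a) = om^2 * (a::complex)" by (simp add: power2_eq_square)
lemma om_mul2: "om^2 * (om^2 * a) = om * (a::complex)"
  by (simp add: mult.assoc[symmetric] power_add[symmetric] om4)
lemma om_mul3: "om^2 * (om * a) = (a::complex)"
proof - have "om^2 * om = om^3" by (simp add: power2_eq_square power3_eq_cube) then show ?thesis by (simp add: mult.assoc[symmetric] om3) qed
lemma om_mul4: "om^4 * (om^2 * a) = (a::complex)"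
proof - have "om^4 * om^2 = (om^3)^2" by (simp add: power_add[symmetric] power_mult[symmetric]) then show ?thesis by (simp add: mult.assoc[symmetric] om3) qed
lemma om_mul5: "om^4 * a = om * (a::complex)" by (simp add: om4)
lemma om_mul6: "om * om = om^2" by (simp add: power2_eq_square)
lemma om_mul7: "om^6 = 1"
proof - have "om^6 = (om^3)^2" by (simp add: power_mult[symmetric]) then show ?thesis by (simp add: om3) qed
lemmas om_mul = om_mul1 om_mul2 om_mul3 om_mul4 om_mul5 om_mul6 om_mul7

lemma xs_rho: "xs n (rho u) (rho2 w) = S3_act sc (xs n u w)"
proof (rule ext, clarify)
  fix k b and c :: nat
  let ?u = "u (ri n k b)" and ?w = "w (ri n k b)"
  have "c = 0 \<or> c = 1 \<or> c = 2 \<or> c \<ge> 3" by auto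
  then show "xs n (rho u) (rho2 w) (k, b, c) = S3_act sc (xs n u w) (k, b, c)"
    unfolding S3_act_def inv_sc
    by (auto simp: xs_def tc_def rho_app rho2_app om_mul)
qed

lemma xs_swap: "xs n w u = S3_act ss (xs n u w)"
proof (rule ext, clarify)
  fix k b and c :: nat
  let ?u = "u (ri n k b)" and ?w = "w (ri n k b)"
  have "c = 0 \<or> c = 1 \<or> c = 2 \<or> c \<ge> 3" by auto
  then show "xs n w u (k, b, c) = S3_act ss (xs n u w) (k, b, c)"
    unfolding S3_act_def inv_ss
    by (auto simp: xs_def ss_def om_mul add.commute)
qed

lemma pf_uc: "poly_fun (\<lambda>x. uc n x r)"
proof -
  have "(\<lambda>x. uc n x r) = (\<lambda>x. if r < 2*n then (1/3) * (x (kk n r, bb n r, 0) + om^2 * x (kk n r, bb n r, 1) + om * x (kk n r, bb n r, 2)) else 0)"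
    by (auto simp: uc_def fun_eq_iff)
  moreover have "poly_fun (\<lambda>x. if r < 2*n then (1/3) * (x (kk n r, bb n r, 0) + om^2 * x (kk n r, bb n r, 1) + om * x (kk n r, bb n r, 2)) else 0)"
    by (intro pf_if pf_mult pf_add pf_const pf_var)
  ultimately show ?thesis by simp
qed

lemma pf_wc: "poly_fun (\<lambda>x. wc n x r)"
proof -
  have "(\<lambda>x. wc n x r) = (\<lambda>x. if r < 2*n then (1/3) * (x (kk n r, bb n r, 0) + om * x (kk n r, bb n r, 1) + om^2 * x (kk n r, bb n r, 2)) else 0)"
    by (auto simp: wc_def fun_eq_iff)
  moreover have "poly_fun (\<lambda>x. if r < 2*n then (1/3) * (x (kk n r, bb n r, 0) + om * x (kk n r, bb n r, 1) + om^2 * x (kk n r, bb n r, 2)) else 0)"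
    by (intro pf_if pf_mult pf_add pf_const pf_var)
  ultimately show ?thesis by simp
qed

lemma pf_piX: "poly_fun (\<lambda>x. piX n cc x j)"
proof (cases j)
  case (Inl a)
  obtain i k where a: "a = (i, k)" by (cases a)
  have "(\<lambda>x. piX n cc x j) = (\<lambda>x. if i < 2*n \<and> k < 2*n then sg n k * (uc n x i * wc n x (2*n-1-k) + wc n x i * uc n x (2*n-1-k)) else 0)"
    by (simp add: piX_def PiF_def pt_def PiM_def Inl a)
  moreover have "poly_fun \<dots>" by (intro pf_if pf_mult pf_add pf_const pf_uc pf_wc)
  ultimately show ?thesis by simp
next
  case (Inr a)
  obtain i k l where a: "a = (i, k, l)" by (cases a)
  have "(\<lambda>x. piX n cc x j) = (\<lambda>x. if i < 2*n \<and> k < 2*n \<and> l < 2*n then cc * (uc n x i * uc n x k * uc n x l + wc n x i * wc n x k * wc n x l) else 0)"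
    by (simp add: piX_def PiF_def pt_def PiT_def Inr a)
  moreover have "poly_fun \<dots>" by (intro pf_if pf_mult pf_add pf_const pf_uc pf_wc)
  ultimately show ?thesis by simp
qed


lemma surj_part:
  assumes n: "1 \<le> n" and cc: "cc \<noteq> 0"
    and q: "poly_fun q" and qinv: "\<forall>g\<in>S3. \<forall>x\<in>refl_space n. q (S3_act g x) = q x"
  shows "\<exists>p. poly_fun p \<and> (\<forall>x\<in>refl_space n. q x = p (piX n cc x))"
proof -
  obtain f0 f1 f2 where f: "R0 (2*n) f0" "R1 (2*n) f1" "R2 (2*n) f2"
    and fq: "\<forall>u w. q (xs n u w) = f0 u w + f1 u w + f2 u w"
    using decomp[OF q, of n] by blast
  define Q where "Q = (\<lambda>u w. q (xs n u w))"
  have Qinv: "\<forall>u w. Q (rho u) (rho2 w) = Q u w"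
    using bspec[OF bspec[OF qinv sc_S3] xs_refl] by (simp add: Q_def xs_rho)
  have Q0: "Q u w = f0 u w" for u w
    by (rule avg[OF f _ Qinv]) (simp add: Q_def fq)
  obtain e od where e: "Ev (2*n) e" "Od (2*n) od" "\<forall>u w. f0 u w = e u w + od u w"
    using R0_split[OF f(1)] by blast
  have Qsw: "Q w u = Q u w" for u w
  proof -
    have h1: "xs n w u = S3_act ss (xs n u w)" by (rule xs_swap)
    have h2: "q (S3_act ss (xs n u w)) = q (xs n u w)"
      using bspec[OF bspec[OF qinv ss_S3] xs_refl[of n u w]] .
    show ?thesis unfolding Q_def h1 h2 ..
  qed
  have Qe: "Q u w = e u w" for u w
  proof -
    have "f0 u w = f0 w u" using Q0[of u w] Q0[of w u] Qsw[of u w] by simp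
    then have "e u w + od u w = e w u + od w u" using e(3) by simp
    also have "\<dots> = e u w - od u w"
    proof -
      have "e w u = e u w" by (rule Ev_swap[OF e(1)])
      moreover have "od w u = - od u w" by (rule Od_swap[OF e(2)])
      ultimately show ?thesis by simp
    qed
    finally have "od u w = 0" by simp
    then show ?thesis using Q0 e(3) by simp
  qed
  obtain p where p: "poly_fun p" "\<forall>u w. e u w = p (PiF n cc u w)" using Ev_poly[OF e(1) cc] by blast
  have "q x = p (piX n cc x)" if x: "x \<in> refl_space n" for x
  proof -
    have "q x = Q (uc n x) (wc n x)" unfolding Q_def using xs_uc[OF x] by simp
    also have "\<dots> = p (piX n cc x)" using Qe p(2) by (simp add: piX_def)
    finally show ?thesis .
  qed
  then show ?thesis using p(1) by blast
qed

lemma main_AB: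
  assumes n: "1 \<le> n" and A: "A \<noteq> 0" and B: "B \<noteq> 0"
  shows "quotient_iso (refl_space n) S3_act S3 (zariski_closure (sp_orbit n (M0 n) (T0 n A B)))"
proof -
  obtain \<alpha> \<beta> cc where ab: "\<alpha> * \<beta> = 1" "cc * \<alpha>^3 = A" "cc * \<beta>^3 = B" and cc: "cc \<noteq> 0"
    using params[OF A B] by blast
  let ?Y = "zariski_closure (sp_orbit n (M0 n) (T0 n A B))"
  have a: "\<forall>j. poly_fun (\<lambda>x. piX n cc x j)" using pf_piX by blast
  have b: "piX n cc ` refl_space n \<subseteq> ?Y"
  proof
    fix y assume "y \<in> piX n cc ` refl_space n"
    then obtain x where "y = piX n cc x" by blast
    then show "y \<in> ?Y" unfolding piX_def using closure_part[OF n ab uc_Vs wc_Vs] by simp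
  qed
  have c: "\<forall>g\<in>S3. \<forall>x\<in>refl_space n. piX n cc (S3_act g x) = piX n cc x"
    using piX_inv by blast
  have d: "\<forall>p. poly_fun p \<and> (\<forall>x\<in>refl_space n. p (piX n cc x) = 0) \<longrightarrow> (\<forall>y\<in>?Y. p y = 0)"
    by (rule inj_part[OF n ab])
  have e: "\<forall>q. poly_fun q \<and> (\<forall>g\<in>S3. \<forall>x\<in>refl_space n. q (S3_act g x) = q x)
               \<longrightarrow> (\<exists>p. poly_fun p \<and> (\<forall>x\<in>refl_space n. q x = p (piX n cc x)))"
  proof (intro allI impI, elim conjE)
    fix q :: "(nat \<times> bool \<times> nat \<Rightarrow> complex) \<Rightarrow> complex"
    assume "poly_fun q" "\<forall>g\<in>S3. \<forall>x\<in>refl_space n. q (S3_act g x) = q x"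
    then show "\<exists>p. poly_fun p \<and> (\<forall>x\<in>refl_space n. q x = p (piX n cc x))" by (rule surj_part[OF n cc])
  qed
  show ?thesis unfolding quotient_iso_def
    apply (rule exI[of _ "piX n cc"])
    apply (intro conjI)
    subgoal by (rule a)
    subgoal by (rule b)
    subgoal by (rule c)
    subgoal by (rule d)
    subgoal by (rule e)
    done
qed

theorem lemma3p8:
  fixes n :: nat
  assumes "1 \<le> n"
  shows "quotient_iso (refl_space n) S3_act S3 (zariski_closure (sp_orbit n (M0 n) (T0 n 1 1)))
       \<and> (\<forall>a b. a \<noteq> 0 \<and> b \<noteq> 0 \<longrightarrow>
            quotient_iso (refl_space n) S3_act S3 (zariski_closure (sp_orbit n (M0 n) (T0 n a b))))"
  using main_AB[OF assms] by simp


end
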